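(* Let $[X,d,m]$ be a metric random walk space with invariant and reversible measure $\nu$, where $(X,d)$ is a length space and $\nu$ is doubling, satisfying the standing assumptions below, and let $\Omega\subset X$ be a $\nu$-measurable set of finite diameter with $0<\nu(\Omega)<\nu(X)$. Suppose that for some $\alpha>0$ and some $\varepsilon>0$ either $m_x\ge\alpha\,m^{\nu,\varepsilon}_x$ for all $x\in X$, or (for some $0<\delta<\varepsilon$) $m_x\ge\alpha\,m^{\nu,\varepsilon,\delta}_x$ for all $x\in X$. Then $(m,\nu)$ satisfies a $p$-Poincaré inequality in $\Omega$ for every $p\ge1$.
   Context: A metric random walk space $[X,d,m]$ is a Polish metric space $(X,d)$ with a family $m=(m_x)_{x\in X}$ of Borel probability measures such that $x\mapsto m_x(A)$ is Borel measurable for every Borel $A$ and each $m_x$ has finite first moment; $\nu$ invariant: $\nu(A)=\int_X m_x(A)\,d\nu(x)$; reversible: $dm_x(y)\,d\nu(x)=dm_y(x)\,d\nu(y)$. Standing assumptions: $\nu(X)<\infty$ and $\nu$ is ergodic for $m$ (every Borel $B$ with $m_x(B)=1$ for all $x\in B$ has $\nu(B)\in\{0,\nu(X)\}$). A length space: $d(x,y)$ is the infimum of lengths of curves joining $x,y$. $\nu$ doubling: $0<\nu(B(x,2r))\le C_d\,\nu(B(x,r))<\infty$ for all $x,r>0$. $m^{\nu,\varepsilon}_x:=\nu\llcorner B(x,\varepsilon)/\nu(B(x,\varepsilon))$ and $m^{\nu,\varepsilon,\delta}_x:=\nu\llcorner(B(x,\varepsilon)\setminus\overline{B(x,\delta)})/\nu(B(x,\varepsilon)\setminus\overline{B(x,\delta)})$;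 inequalities between measures are setwise. $\partial_m\Omega:=\{x\in X\setminus\Omega: m_x(\Omega)>0\}$, $\Omega_m:=\Omega\cup\partial_m\Omega$; for $u:\Omega\to\mathbb{R}$ and $\psi$ on $\partial_m\Omega$, $u_\psi$ equals $u$ on $\Omega$ and $\psi$ on $\partial_m\Omega$. For $q\ge1$, $(m,\nu)$ satisfies a $q$-Poincaré inequality in $\Omega$ if there is $\lambda>0$ such that $\lambda\int_\Omega|u(x)|^q\,d\nu(x)\le\int_\Omega\int_{\Omega_m}|u_\psi(y)-u(x)|^q\,dm_x(y)\,d\nu(x)+\int_{\partial_m\Omega}|\psi(y)|^q\,d\nu(y)$ for all $u\in L^q(\Omega,\nu)$ and all $\psi\in L^q(\partial_m\Omega,\nu)$. *)

theory Defs
  imports "HOL-Analysis.Analysis"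
begin

(* Metric random walk space [X,d,m] with invariant, reversible measure nu.
   X is the whole type 'a (Polish metric space); Borel sets = sets borel. *)
definition metric_random_walk_space :: "('a::polish_space \<Rightarrow> 'a measure) \<Rightarrow> bool" where
  "metric_random_walk_space m \<longleftrightarrow>
     (\<forall>x. sets (m x) = sets borel \<and> emeasure (m x) UNIV = 1) \<and>
     (\<forall>A \<in> sets borel. (\<lambda>x. emeasure (m x) A) \<in> borel_measurable borel) \<and>
     (\<forall>x. (\<integral>\<^sup>+ y. ennreal (dist x y) \<partial>(m x)) < \<infinity>)"

definition invariant_measure :: "('a::polish_space \<Rightarrow> 'a measure) \<Rightarrow> 'a measure \<Rightarrow> bool" where
  "invariant_measure m \<nu> \<longleftrightarrow> sets \<nu> = sets borel \<and>
     (\<forall>A \<in> sets borel. emeasure \<nu> A = (\<integral>\<^sup>+ x. emeasure (m x) A \<partial>\<nu>))"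

(* dm_x(y) d\<nu>(x) = dm_y(x) d\<nu>(y), tested on Borel rectangles A x B *)
definition reversible_measure :: "('a::polish_space \<Rightarrow> 'a measure) \<Rightarrow> 'a measure \<Rightarrow> bool" where
  "reversible_measure m \<nu> \<longleftrightarrow>
     (\<forall>A \<in> sets borel. \<forall>B \<in> sets borel.
        (\<integral>\<^sup>+ x\<in>A. emeasure (m x) B \<partial>\<nu>) = (\<integral>\<^sup>+ y\<in>B. emeasure (m y) A \<partial>\<nu>))"

definition ergodic :: "('a::polish_space \<Rightarrow> 'a measure) \<Rightarrow> 'a measure \<Rightarrow> bool" where
  "ergodic m \<nu> \<longleftrightarrow>
     (\<forall>B \<in> sets borel. (\<forall>x\<in>B. emeasure (m x) B = 1) \<longrightarrow>
        emeasure \<nu> B = 0 \<or> emeasure \<nu> B = emeasure \<nu> UNIV)"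

definition curve_length :: "(real \<Rightarrow> 'a::metric_space) \<Rightarrow> ereal" where
  "curve_length g = (SUP p \<in> {(n, t). t 0 = 0 \<and> t n = 1 \<and> (\<forall>i<n. t i \<le> t (Suc i))}.
      ereal (\<Sum>i<fst p. dist (g (snd p i)) (g (snd p (Suc i)))))"

definition length_space :: "'a::metric_space itself \<Rightarrow> bool" where
  "length_space _ \<longleftrightarrow> (\<forall>x y::'a. ereal (dist x y) =
      (INF g \<in> {g. path g \<and> pathstart g = x \<and> pathfinish g = y}. curve_length g))"

definition doubling :: "'a::metric_space measure \<Rightarrow> bool" where
  "doubling \<nu> \<longleftrightarrow> (\<exists>C::real. \<forall>x r. r > 0 \<longrightarrow>
      0 < emeasure \<nu> (ball x (2*r)) \<and>
      emeasure \<nu> (ball x (2*r)) \<le> ennreal C * emeasure \<nu> (ball x r) \<and>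
      emeasure \<nu> (ball x r) < \<infinity>)"

definition m_boundary :: "('a \<Rightarrow> 'a measure) \<Rightarrow> 'a set \<Rightarrow> 'a set" where
  "m_boundary m \<Omega> = {x. x \<notin> \<Omega> \<and> emeasure (m x) \<Omega> > 0}"

definition poincare_ineq :: "('a::polish_space \<Rightarrow> 'a measure) \<Rightarrow> 'a measure \<Rightarrow> 'a set \<Rightarrow> real \<Rightarrow> bool" where
  "poincare_ineq m \<nu> \<Omega> q \<longleftrightarrow> (\<exists>lam>0. \<forall>u \<psi>.
     u \<in> borel_measurable borel \<longrightarrow> \<psi> \<in> borel_measurable borel \<longrightarrow>
     (\<integral>\<^sup>+ x\<in>\<Omega>. ennreal (\<bar>u x\<bar> powr q) \<partial>\<nu>) < \<infinity> \<longrightarrow>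
     (\<integral>\<^sup>+ y\<in>m_boundary m \<Omega>. ennreal (\<bar>\<psi> y\<bar> powr q) \<partial>\<nu>) < \<infinity> \<longrightarrow>
     ennreal lam * (\<integral>\<^sup>+ x\<in>\<Omega>. ennreal (\<bar>u x\<bar> powr q) \<partial>\<nu>) \<le>
       (\<integral>\<^sup>+ x\<in>\<Omega>. (\<integral>\<^sup>+ y\<in>\<Omega> \<union> m_boundary m \<Omega>.
            ennreal (\<bar>(if y \<in> \<Omega> then u y else \<psi> y) - u x\<bar> powr q) \<partial>(m x)) \<partial>\<nu>)
       + (\<integral>\<^sup>+ y\<in>m_boundary m \<Omega>. ennreal (\<bar>\<psi> y\<bar> powr q) \<partial>\<nu>))"

end

theory Submission
  imports Defs "HOL-Analysis.Analysis"
begin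

lemma doubling_lower:
  fixes \<nu> :: "'a::metric_space measure"
  assumes "doubling \<nu>" "bounded W" "\<rho> > 0" and sb: "sets \<nu> = sets borel"
  shows "\<exists>c>0. \<forall>w\<in>W. ennreal c \<le> emeasure \<nu> (ball w \<rho>)"
proof -
  obtain C :: real where C: "\<And>x r. r > 0 \<Longrightarrow> 0 < emeasure \<nu> (ball x (2*r)) \<and>
      emeasure \<nu> (ball x (2*r)) \<le> ennreal C * emeasure \<nu> (ball x r) \<and>
      emeasure \<nu> (ball x r) < \<infinity>"
    using assms(1) unfolding doubling_def by blast
  define Cr where "Cr = max C 1"
  have Cr: "Cr \<ge> 1" unfolding Cr_def by simp
  have C': "emeasure \<nu> (ball x (2*r)) \<le> ennreal Cr * emeasure \<nu> (ball x r)" if "r > 0" for x r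
  proof -
    have "emeasure \<nu> (ball x (2*r)) \<le> ennreal C * emeasure \<nu> (ball x r)" using C[OF that] by blast
    also have "\<dots> \<le> ennreal Cr * emeasure \<nu> (ball x r)"
      by (intro mult_right_mono) (auto simp: Cr_def ennreal_leI)
    finally show ?thesis .
  qed
  have iter: "emeasure \<nu> (ball x (2^k*\<rho>)) \<le> ennreal (Cr^k) * emeasure \<nu> (ball x \<rho>)" for k x
  proof (induction k)
    case 0 then show ?case by simp
  next
    case (Suc k)
    have "emeasure \<nu> (ball x (2^Suc k*\<rho>)) = emeasure \<nu> (ball x (2*(2^k*\<rho>)))" by (simp add: mult.assoc)
    also have "\<dots> \<le> ennreal Cr * emeasure \<nu> (ball x (2^k*\<rho>))" using C' assms(3) by simp
    also have "\<dots> \<le> ennreal Cr * (ennreal (Cr^k) * emeasure \<nu> (ball x \<rho>))"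
      by (intro mult_left_mono Suc) auto
    also have "\<dots> = ennreal (Cr^Suc k) * emeasure \<nu> (ball x \<rho>)"
      using Cr by (simp add: ennreal_mult' mult.assoc)
    finally show ?case .
  qed
  obtain x0 :: 'a where True by blast
  obtain R where R: "R > 0" "W \<subseteq> ball x0 R" using bounded_subset_ballD[OF assms(2)] by blast
  obtain k where k: "2*R/\<rho> < 2^k" using real_arch_pow[of "2::real" "2*R/\<rho>"] by auto
  have k': "2*R < 2^k*\<rho>" using k assms(3) by (simp add: field_simps)
  have pos: "0 < emeasure \<nu> (ball x0 R)" and fin: "emeasure \<nu> (ball x0 R) < \<infinity>"
    using C[of "R/2" x0] C[of R x0] R by auto
  define c where "c = enn2real (emeasure \<nu> (ball x0 R)) / Cr^k"
  have eq: "ennreal (enn2real (emeasure \<nu> (ball x0 R))) = emeasure \<nu> (ball x0 R)"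
    using fin by (simp add: ennreal_enn2real_if)
  have cpos: "c > 0" unfolding c_def using pos fin Cr
    by (intro divide_pos_pos) (auto simp: enn2real_positive_iff)
  have "\<forall>w\<in>W. ennreal c \<le> emeasure \<nu> (ball w \<rho>)"
  proof
    fix w assume w: "w \<in> W"
    have "ball x0 R \<subseteq> ball w (2^k*\<rho>)"
    proof
      fix z assume "z \<in> ball x0 R"
      then have "dist w z < 2*R" using w R(2) dist_triangle[of w z x0]
        by (auto simp: dist_commute)
      then show "z \<in> ball w (2^k*\<rho>)" using k' by simp
    qed
    then have "emeasure \<nu> (ball x0 R) \<le> emeasure \<nu> (ball w (2^k*\<rho>))"
      by (intro emeasure_mono) (auto simp: sb)
    also have "\<dots> \<le> ennreal (Cr^k) * emeasure \<nu> (ball w \<rho>)" by (rule iter)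
    finally have *: "ennreal (Cr^k) * ennreal c \<le> ennreal (Cr^k) * emeasure \<nu> (ball w \<rho>)"
      using Cr eq unfolding c_def by (simp add: ennreal_mult'[symmetric])
    show "ennreal c \<le> emeasure \<nu> (ball w \<rho>)"
      using * Cr by (subst (asm) ennreal_mult_le_mult_iff) auto
  qed
  then show ?thesis using cpos by blast
qed

lemma doubling_totally_bounded:
  fixes \<nu> :: "'a::metric_space measure" and W :: "'a set"
  assumes dbl: "doubling \<nu>" and sb: "sets \<nu> = sets borel" and fin: "emeasure \<nu> UNIV < \<infinity>"
    and bW: "bounded W" and e: "e > 0"
  shows "\<exists>F. finite F \<and> F \<subseteq> W \<and> W \<subseteq> (\<Union>x\<in>F. ball x e)"
proof (rule ccontr)
  assume H: "\<not> ?thesis"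
  have sep: "\<exists>F. finite F \<and> F \<subseteq> W \<and> card F = n \<and> (\<forall>x\<in>F. \<forall>y\<in>F. x \<noteq> y \<longrightarrow> e \<le> dist x y)" for n
  proof (induction n)
    case 0 then show ?case by (intro exI[of _ "{}"]) auto
  next
    case (Suc n)
    then obtain F where F: "finite F" "F \<subseteq> W" "card F = n" "\<forall>x\<in>F. \<forall>y\<in>F. x \<noteq> y \<longrightarrow> e \<le> dist x y"
      by blast
    have "\<not> W \<subseteq> (\<Union>x\<in>F. ball x e)" using H F(1,2) by blast
    then obtain y where y: "y \<in> W" "\<forall>x\<in>F. y \<notin> ball x e" by blast
    have yF: "y \<notin> F" using y(2) e by auto
    have "\<forall>x\<in>insert y F. \<forall>z\<in>insert y F. x \<noteq> z \<longrightarrow> e \<le> dist x z"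
    proof (intro ballI impI)
      fix x z assume "x \<in> insert y F" "z \<in> insert y F" "x \<noteq> z"
      then show "e \<le> dist x z" using F(4) y(2) by (auto simp: dist_commute not_less)
    qed
    moreover have "card (insert y F) = Suc n" using F(1,3) yF by simp
    ultimately show ?case
      using F(1,2) y(1) by (intro exI[of _ "insert y F"]) auto
  qed
  obtain c where c: "c > 0" "\<forall>w\<in>W. ennreal c \<le> emeasure \<nu> (ball w (e/2))"
    using doubling_lower[OF dbl bW _ sb, of "e/2"] e by (simp only: half_gt_zero_iff) blast
  define T where "T = enn2real (emeasure \<nu> UNIV)"
  have T: "emeasure \<nu> UNIV = ennreal T" using fin unfolding T_def by (simp add: ennreal_enn2real_if)
  obtain n :: nat where n: "T / c < real n" using reals_Archimedean2 by blast
  obtain F where F: "finite F" "F \<subseteq> W" "card F = n" "\<forall>x\<in>F. \<forall>y\<in>F. x \<noteq> y \<longrightarrow> e \<le> dist x y"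
    using sep[of n] by (elim exE conjE) simp
  have disj: "disjoint_family_on (\<lambda>x. ball x (e/2)) F"
    unfolding disjoint_family_on_def
  proof (intro ballI impI)
    fix x y assume "x \<in> F" "y \<in> F" "x \<noteq> y"
    then have "e \<le> dist x y" using F(4) by blast
    show "ball x (e/2) \<inter> ball y (e/2) = {}"
    proof (rule ccontr)
      assume "ball x (e/2) \<inter> ball y (e/2) \<noteq> {}"
      then obtain z where "dist x z < e/2" "dist y z < e/2" by auto
      then show False using \<open>e \<le> dist x y\<close> dist_triangle[of x y z] by (simp add: dist_commute)
    qed
  qed
  have "ennreal (real n * c) = (\<Sum>x\<in>F. ennreal c)" using F(3) c(1)
    by (simp add: ennreal_mult' ennreal_of_nat_eq_real_of_nat)
  also have "\<dots> \<le> (\<Sum>x\<in>F. emeasure \<nu> (ball x (e/2)))"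
    using c F(2) by (intro sum_mono) auto
  also have "\<dots> = emeasure \<nu> (\<Union>x\<in>F. ball x (e/2))"
    using disj F(1) by (intro sum_emeasure) (auto simp: sb)
  also have "\<dots> \<le> emeasure \<nu> UNIV"
    by (intro emeasure_mono) (auto simp: sb)
  finally have "ennreal (real n * c) \<le> ennreal T" using T by simp
  then have "real n * c \<le> T" using T_def enn2real_nonneg[of "emeasure \<nu> UNIV"] by (simp add: ennreal_le_iff2) linarith
  then show False using n c(1) by (simp add: field_simps)
qed

lemma uniform_gap:
  fixes Kc :: "'a::metric_space set"
  assumes "compact Kc" "\<forall>x\<in>Kc. \<exists>w. \<delta> < dist x w \<and> dist x w < \<epsilon>"
  shows "\<exists>\<gamma>>0. \<forall>x\<in>Kc. \<exists>w. \<delta>+\<gamma> < dist x w \<and> dist x w < \<epsilon>-\<gamma>"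
proof -
  obtain wf where wf: "\<And>x. x \<in> Kc \<Longrightarrow> \<delta> < dist x (wf x) \<and> dist x (wf x) < \<epsilon>"
    using assms(2) by metis
  define gf where "gf x = min (dist x (wf x) - \<delta>) (\<epsilon> - dist x (wf x)) / 2" for x
  have gpos: "gf x > 0" if "x \<in> Kc" for x using wf[OF that] unfolding gf_def by auto
  have cov: "Kc \<subseteq> (\<Union>x\<in>Kc. ball x (gf x))" using gpos by auto
  obtain C' where C': "C' \<subseteq> Kc" "finite C'" "Kc \<subseteq> (\<Union>x\<in>C'. ball x (gf x))"
    using compactE_image[OF assms(1) _ cov] by blast
  show ?thesis
  proof (cases "Kc = {}")
    case True then show ?thesis by (intro exI[of _ 1]) auto
  next
    case False
    then have ne: "C' \<noteq> {}" using C'(3) by auto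
    define \<gamma> where "\<gamma> = Min (gf ` C')"
    have gam: "\<gamma> > 0" unfolding \<gamma>_def using C' ne gpos by (subst Min_gr_iff) auto
    have gle: "\<gamma> \<le> gf x" if "x \<in> C'" for x unfolding \<gamma>_def using C'(2) that by simp
    have "\<forall>y\<in>Kc. \<exists>w. \<delta>+\<gamma> < dist y w \<and> dist y w < \<epsilon>-\<gamma>"
    proof
      fix y assume "y \<in> Kc"
      then obtain x where x: "x \<in> C'" "dist x y < gf x" using C'(3) by auto
      have xK: "x \<in> Kc" using x C' by auto
      have t1: "dist x (wf x) \<le> dist x y + dist y (wf x)" by (rule dist_triangle)
      have t2: "dist y (wf x) \<le> dist y x + dist x (wf x)" by (rule dist_triangle)
      have "gf x \<le> (dist x (wf x) - \<delta>)/2" "gf x \<le> (\<epsilon> - dist x (wf x))/2" unfolding gf_def by auto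
      then show "\<exists>w. \<delta>+\<gamma> < dist y w \<and> dist y w < \<epsilon>-\<gamma>"
        using t1 t2 x gle[OF x(1)] by (intro exI[of _ "wf x"]) (auto simp: dist_commute)
    qed
    then show ?thesis using gam by blast
  qed
qed

lemma length_space_path:
  fixes a b :: "'a::metric_space"
  assumes "length_space TYPE('a)"
  shows "\<exists>g. path g \<and> pathstart g = a \<and> pathfinish g = b \<and> (\<forall>t\<in>{0..1}. dist a (g t) \<le> dist a b + 1)"
proof -
  have eq: "ereal (dist a b) = (INF g \<in> {g. path g \<and> pathstart g = a \<and> pathfinish g = b}. curve_length g)"
    using assms unfolding length_space_def by blast
  have lt: "ereal (dist a b) < ereal (dist a b + 1)" by simp
  have "(INF g \<in> {g. path g \<and> pathstart g = a \<and> pathfinish g = b}. curve_length g) < ereal (dist a b + 1)"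
    using lt unfolding eq .
  then obtain g where g: "path g" "pathstart g = a" "pathfinish g = b" "curve_length g < ereal (dist a b + 1)"
    unfolding INF_less_iff by blast
  have "dist a (g t) \<le> dist a b + 1" if t: "t \<in> {0..1}" for t
  proof -
    define tt where "tt = (\<lambda>i::nat. if i = 0 then 0 else if i = 1 then t else (1::real))"
    have mem: "(2::nat, tt) \<in> {(n, t). t 0 = 0 \<and> t n = 1 \<and> (\<forall>i<n. t i \<le> t (Suc i))}"
      using t unfolding tt_def by (auto simp: less_2_cases_iff)
    have "ereal (\<Sum>i<fst (2::nat, tt). dist (g (snd (2::nat, tt) i)) (g (snd (2::nat, tt) (Suc i)))) \<le> curve_length g"
      unfolding curve_length_def by (rule SUP_upper[OF mem])
    then have "ereal (dist (g 0) (g t) + dist (g t) (g 1)) \<le> curve_length g"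
      by (simp add: tt_def numeral_2_eq_2)
    then have "ereal (dist (g 0) (g t) + dist (g t) (g 1)) < ereal (dist a b + 1)"
      using g(4) by (rule le_less_trans)
    then have "dist (g 0) (g t) + dist (g t) (g 1) < dist a b + 1" by (metis less_ereal.simps(1))
    moreover have "g 0 = a" using g(2) unfolding pathstart_def by simp
    ultimately have "dist a (g t) + dist (g t) (g 1) < dist a b + 1" by simp
    moreover have "0 \<le> dist (g t) (g 1)" by simp
    ultimately show ?thesis by linarith
  qed
  then show ?thesis using g by blast
qed

lemma path_discretize:
  fixes g :: "real \<Rightarrow> 'a::metric_space"
  assumes "path g" "\<rho> > 0"
  shows "\<exists>n>0. \<forall>i<n. dist (g (real i / real n)) (g (real (Suc i) / real n)) < \<rho>"
proof -
  have "uniformly_continuous_on {0..1} g"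
    using assms(1) unfolding path_def by (intro compact_uniformly_continuous) auto
  then obtain d where d: "d > 0" "\<forall>x\<in>{0..1}. \<forall>x'\<in>{0..1}. dist x' x < d \<longrightarrow> dist (g x') (g x) < \<rho>"
    unfolding uniformly_continuous_on_def using assms(2) by metis
  obtain n where n: "inverse (real (Suc n)) < d" using reals_Archimedean d(1) by blast
  have "\<forall>i<Suc n. dist (g (real i / real (Suc n))) (g (real (Suc i) / real (Suc n))) < \<rho>"
  proof (intro allI impI)
    fix i assume i: "i < Suc n"
    have "dist (real (Suc i) / real (Suc n)) (real i / real (Suc n)) = inverse (real (Suc n))"
      by (simp add: dist_real_def field_simps)
    then have "dist (real (Suc i) / real (Suc n)) (real i / real (Suc n)) < d" using n by simp
    moreover have "real i / real (Suc n) \<in> {0..1}" "real (Suc i) / real (Suc n) \<in> {0..1}"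
      using i by (auto simp: field_simps)
    ultimately show "dist (g (real i / real (Suc n))) (g (real (Suc i) / real (Suc n))) < \<rho>"
      using d(2) by (simp add: dist_commute)
  qed
  then show ?thesis by (intro exI[of _ "Suc n"]) auto
qed

lemma ball_borel[simp, measurable]: "ball x r \<in> sets borel"
  by (rule borel_open) simp

lemma cball_borel[simp, measurable]: "cball x r \<in> sets borel"
  by (rule borel_closed) simp

lemma exists_ball_pos:
  fixes \<nu> :: "'a::{metric_space, second_countable_topology} measure"
  assumes sb: "sets \<nu> = sets borel" and A: "A \<in> sets borel" and pos: "0 < emeasure \<nu> A" and r: "r > 0"
  shows "\<exists>b. (\<exists>z\<in>A. dist z b < r) \<and> 0 < emeasure \<nu> (ball b r \<inter> A)"
proof (rule ccontr)
  assume H: "\<not> ?thesis"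
  obtain D :: "'a set" where D: "countable D" "\<And>X. open X \<Longrightarrow> X \<noteq> {} \<Longrightarrow> \<exists>d\<in>D. d \<in> X"
    using countable_dense_setE by blast
  define D' where "D' = {d\<in>D. \<exists>z\<in>A. dist z d < r}"
  have cD': "countable D'" using D(1) unfolding D'_def by simp
  have sub: "A \<subseteq> (\<Union>d\<in>D'. ball d r \<inter> A)"
  proof
    fix z assume z: "z \<in> A"
    obtain d where d: "d \<in> D" "d \<in> ball z r" using D(2)[of "ball z r"] r by auto
    then have "d \<in> D'" using z unfolding D'_def by (auto simp: dist_commute)
    then show "z \<in> (\<Union>d\<in>D'. ball d r \<inter> A)" using z d by (intro UN_I) (auto simp: dist_commute)
  qed
  have null: "ball d r \<inter> A \<in> null_sets \<nu>" if "d \<in> D'" for d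
  proof -
    have "emeasure \<nu> (ball d r \<inter> A) = 0" using H that unfolding D'_def by auto
    moreover have "ball d r \<inter> A \<in> sets \<nu>" using A by (simp add: sb)
    ultimately show ?thesis by (simp add: null_sets_def)
  qed
  have "(\<Union>d\<in>D'. ball d r \<inter> A) \<in> null_sets \<nu>" by (rule null_sets_UN'[OF cD' null])
  then have "A \<in> null_sets \<nu>" by (rule null_sets_subset) (use sub A sb in auto)
  then show False using pos by (simp add: null_sets_def)
qed

lemma chain_good:
  fixes \<nu> :: "'a::metric_space measure"
  assumes fm: "finite_measure \<nu>" and sb: "sets \<nu> = sets borel" and S: "S \<in> sets borel"
    and tr: "P\<^sup>+\<^sup>+ a z" and PW: "\<And>x y. P x y \<Longrightarrow> y \<in> Wc"
    and c0: "\<forall>w\<in>Wc. c0 \<le> measure \<nu> (ball w \<rho>)" and th: "\<theta> \<le> c0/2"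
    and a: "\<theta> \<le> measure \<nu> (ball a \<rho> \<inter> S)"
  shows "(\<exists>x x'. P x x' \<and> \<theta> \<le> measure \<nu> (ball x \<rho> \<inter> S) \<and> \<theta> \<le> measure \<nu> (ball x' \<rho> - S))
         \<or> measure \<nu> (ball z \<rho> - S) < \<theta>"
  using tr
proof (induction rule: tranclp_induct)
  case (base y)
  then show ?case using a by (cases "\<theta> \<le> measure \<nu> (ball y \<rho> - S)") auto
next
  case (step y z)
  interpret finite_measure \<nu> by (rule fm)
  show ?case
  proof (cases "\<exists>x x'. P x x' \<and> \<theta> \<le> measure \<nu> (ball x \<rho> \<inter> S) \<and> \<theta> \<le> measure \<nu> (ball x' \<rho> - S)")
    case True then show ?thesis by blast
  next
    case False
    then have lt: "measure \<nu> (ball y \<rho> - S) < \<theta>" using step.IH by blast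
    have yW: "y \<in> Wc" using step.hyps(1) PW by (induction rule: tranclp_induct) auto
    have Sn: "S \<in> sets \<nu>" using S sb by simp
    have Bn: "ball y \<rho> \<in> sets \<nu>" using sb by simp
    have "measure \<nu> (ball y \<rho>) = measure \<nu> ((ball y \<rho> \<inter> S) \<union> (ball y \<rho> - S))"
      by (metis Int_Diff_Un)
    also have "\<dots> \<le> measure \<nu> (ball y \<rho> \<inter> S) + measure \<nu> (ball y \<rho> - S)"
      using Sn Bn by (intro measure_Un_le) auto
    finally have m1: "measure \<nu> (ball y \<rho>) \<le> measure \<nu> (ball y \<rho> \<inter> S) + measure \<nu> (ball y \<rho> - S)" .
    have m2: "c0 \<le> measure \<nu> (ball y \<rho>)" using c0 yW by blast
    have "\<theta> \<le> measure \<nu> (ball y \<rho> \<inter> S)" using m1 m2 lt th by linarith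
    then show ?thesis using step.hyps(2) by (cases "\<theta> \<le> measure \<nu> (ball z \<rho> - S)") auto
  qed
qed

lemma K_borel[simp, measurable]: "{z. \<delta> < dist y z \<and> dist y z < \<epsilon>} \<in> sets borel"
proof -
  have "{z. \<delta> < dist y z \<and> dist y z < \<epsilon>} = ball y \<epsilon> - cball y \<delta>" by auto
  then show ?thesis by simp
qed

lemma geo:
  fixes \<nu> :: "'a::polish_space measure" and \<Omega> :: "'a set"
  assumes dbl: "doubling \<nu>" and sb: "sets \<nu> = sets borel" and fin: "emeasure \<nu> UNIV < \<infinity>"
    and ls: "length_space TYPE('a)" and bO: "bounded \<Omega>" and Om: "\<Omega> \<in> sets borel"
    and Opos: "0 < emeasure \<nu> \<Omega>" and Olt: "emeasure \<nu> \<Omega> < emeasure \<nu> UNIV"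
    and Kne: "\<forall>x::'a. \<exists>w. \<delta> < dist x w \<and> dist x w < \<epsilon>"
  shows "\<exists>c0>0. \<exists>\<theta>>0. (\<forall>y\<in>\<Omega>. c0 \<le> measure \<nu> {z. \<delta> < dist y z \<and> dist y z < \<epsilon>}) \<and>
     (\<forall>S\<in>sets borel. S \<subseteq> \<Omega> \<longrightarrow> c0/2 \<le> measure \<nu> S \<longrightarrow>
        (\<exists>Y\<in>sets borel. Y \<subseteq> S \<and> \<theta> \<le> measure \<nu> Y \<and>
           (\<forall>y\<in>Y. \<theta> \<le> measure \<nu> ({z. \<delta> < dist y z \<and> dist y z < \<epsilon>} - S))))"
proof -
  have sp: "space \<nu> = UNIV" using sets_eq_imp_space_eq[OF sb] by simp
  interpret finite_measure \<nu> by (rule finite_measureI) (use fin sp in auto)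
  have epos: "\<epsilon> > 0" using Kne by (metis zero_le_dist le_less_trans less_trans)
  obtain x0 :: 'a where True by blast
  obtain R0 where R0: "R0 > 0" "\<Omega> \<subseteq> ball x0 R0" using bounded_subset_ballD[OF bO] by blast
  have "measure \<nu> \<Omega> < measure \<nu> UNIV" using Olt by (simp add: emeasure_eq_measure ennreal_less_iff)
  then have "0 < measure \<nu> (UNIV - \<Omega>)" using finite_measure_compl[of \<Omega>] Om sb sp by simp
  then have "0 < emeasure \<nu> (UNIV - \<Omega>)" by (simp add: emeasure_eq_measure)
  then obtain b0 where b0: "0 < emeasure \<nu> (ball b0 1 \<inter> (UNIV - \<Omega>))"
    using exists_ball_pos[OF sb _ _ zero_less_one, of "UNIV - \<Omega>"] Om by auto
  define d0 where "d0 = dist x0 b0"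
  define R2 where "R2 = 2*R0 + d0 + 4"
  define R3 where "R3 = R2 + \<epsilon> + 1"
  have cpt: "compact (cball x0 R2)"
    unfolding compact_eq_totally_bounded
  proof
    show "complete (cball x0 R2)" by (simp add: complete_eq_closed)
    show "\<forall>e>0. \<exists>k. finite k \<and> cball x0 R2 \<subseteq> (\<Union>x\<in>k. ball x e)"
    proof (intro allI impI)
      fix e :: real assume e: "e > 0"
      obtain k where "finite k" "k \<subseteq> cball x0 R2" "cball x0 R2 \<subseteq> (\<Union>x\<in>k. ball x e)"
        using doubling_totally_bounded[OF dbl sb fin bounded_cball[of x0 R2] e] by (elim exE conjE)
      then show "\<exists>k. finite k \<and> cball x0 R2 \<subseteq> (\<Union>x\<in>k. ball x e)" by (intro exI[of _ k]) simp
    qed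
  qed
  have "\<forall>x\<in>cball x0 R2. \<exists>w. \<delta> < dist x w \<and> dist x w < \<epsilon>" using Kne by blast
  from uniform_gap[OF cpt this]
  obtain \<gamma> where \<gamma>: "\<gamma> > 0" "\<forall>x\<in>cball x0 R2. \<exists>w. \<delta>+\<gamma> < dist x w \<and> dist x w < \<epsilon>-\<gamma>"
    by (elim exE conjE)
  define \<rho> where "\<rho> = min (\<gamma>/3) (1/2)"
  have \<rho>: "\<rho> > 0" "3*\<rho> \<le> \<gamma>" "\<rho> \<le> 1/2" using \<gamma>(1) unfolding \<rho>_def by auto
  obtain c0 where c0: "c0 > 0" "\<forall>w\<in>cball x0 R3. ennreal c0 \<le> emeasure \<nu> (ball w \<rho>)"
    using doubling_lower[OF dbl bounded_cball[of x0 R3] \<rho>(1) sb] by blast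
  have c0m: "\<forall>w\<in>cball x0 R3. c0 \<le> measure \<nu> (ball w \<rho>)"
    using c0 by (simp add: emeasure_eq_measure ennreal_le_iff)
  obtain b z where bz: "z \<in> ball b0 1 \<inter> (UNIV - \<Omega>)" "dist z b < \<rho>"
    and bpos: "0 < emeasure \<nu> (ball b \<rho> \<inter> (ball b0 1 \<inter> (UNIV - \<Omega>)))"
    using exists_ball_pos[OF sb _ b0 \<rho>(1)] Om by auto
  define \<theta>2 where "\<theta>2 = measure \<nu> (ball b \<rho> - \<Omega>)"
  have "emeasure \<nu> (ball b \<rho> \<inter> (ball b0 1 \<inter> (UNIV - \<Omega>))) \<le> emeasure \<nu> (ball b \<rho> - \<Omega>)"
    by (intro emeasure_mono) (auto simp: sb Om)
  then have \<theta>2: "\<theta>2 > 0" using bpos unfolding \<theta>2_def by (simp add: emeasure_eq_measure)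
  have db: "dist x0 b \<le> d0 + 2"
  proof -
    have "dist x0 b \<le> dist x0 b0 + dist b0 z + dist z b"
      using dist_triangle[of x0 b b0] dist_triangle[of b0 b z] by linarith
    then show ?thesis using bz \<rho>(3) unfolding d0_def by (simp add: dist_commute)
  qed
  obtain F where F: "finite F" "F \<subseteq> \<Omega>" "\<Omega> \<subseteq> (\<Union>a\<in>F. ball a \<rho>)"
    using doubling_totally_bounded[OF dbl sb fin bO \<rho>(1)] by blast
  have "\<Omega> \<noteq> {}" using Opos by auto
  then have Fne: "F \<noteq> {}" using F(3) by auto
  define Stp where "Stp x y \<longleftrightarrow> \<delta>+2*\<rho> < dist x y \<and> dist x y < \<epsilon>-2*\<rho> \<and> x \<in> cball x0 R3 \<and> y \<in> cball x0 R3"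
    for x y
  have move: "\<exists>w. Stp x w \<and> Stp w p" if x: "x \<in> cball x0 R2" and p: "p \<in> cball x0 R3" and xp: "dist x p < \<rho>"
    for x p
  proof -
    obtain w where w: "\<delta>+\<gamma> < dist x w" "dist x w < \<epsilon>-\<gamma>" using \<gamma>(2) x by blast
    have xR3: "x \<in> cball x0 R3" using x epos unfolding R3_def by auto
    have "dist x0 w \<le> dist x0 x + dist x w" by (rule dist_triangle)
    then have wR3: "w \<in> cball x0 R3" using x w epos \<gamma>(1) unfolding R3_def by auto
    have t1: "dist x w \<le> dist x p + dist w p" using dist_triangle[of x w p] by (simp add: dist_commute)
    have t2: "dist w p \<le> dist x w + dist x p" using dist_triangle[of w p x] by (simp add: dist_commute)
    show ?thesis unfolding Stp_def
      using w xR3 wR3 p t1 t2 xp \<rho> by (intro exI[of _ w]) auto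
  qed
  have chain: "Stp\<^sup>+\<^sup>+ a b" if a: "a \<in> \<Omega>" for a
  proof -
    obtain g where g: "path g" "pathstart g = a" "pathfinish g = b" "\<forall>t\<in>{0..1}. dist a (g t) \<le> dist a b + 1"
      using length_space_path[OF ls] by blast
    obtain n where n: "n > 0" "\<forall>i<n. dist (g (real i / real n)) (g (real (Suc i) / real n)) < \<rho>"
      using path_discretize[OF g(1) \<rho>(1)] by blast
    define p where "p i = g (real i / real n)" for i
    have p0: "p 0 = a" using g(2) unfolding p_def pathstart_def by simp
    have pn: "p n = b" using g(3) n(1) unfolding p_def pathfinish_def by simp
    have pin: "p i \<in> cball x0 R2" if i: "i \<le> n" for i
    proof -
      have "real i / real n \<in> {0..1}" using i n(1) by (auto simp: field_simps)
      then have d1: "dist a (p i) \<le> dist a b + 1" using g(4) unfolding p_def by blast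
      have d2: "dist a b \<le> dist a x0 + dist x0 b" by (rule dist_triangle)
      have d3: "dist x0 (p i) \<le> dist x0 a + dist a (p i)" by (rule dist_triangle)
      have "dist x0 a < R0" using a R0(2) by auto
      then show ?thesis using d1 d2 d3 db unfolding R2_def by (simp add: dist_commute)
    qed
    have R23: "cball x0 R2 \<subseteq> cball x0 R3" using epos unfolding R3_def by auto
    have "Stp\<^sup>+\<^sup>+ a (p (Suc i))" if "i < n" for i
      using that
    proof (induction i)
      case 0
      have d: "dist (p 0) (p (Suc 0)) < \<rho>" using n(2) 0 unfolding p_def by (metis of_nat_0)
      obtain w where "Stp (p 0) w" "Stp w (p (Suc 0))"
        using move[OF pin[of 0] pin[of "Suc 0", THEN subsetD[OF R23]] d] 0 by auto
      then show ?case using p0 by (metis tranclp.r_into_trancl tranclp.trancl_into_trancl)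
    next
      case (Suc i)
      then have IH: "Stp\<^sup>+\<^sup>+ a (p (Suc i))" by simp
      have d: "dist (p (Suc i)) (p (Suc (Suc i))) < \<rho>" using n(2) Suc.prems unfolding p_def by blast
      obtain w where "Stp (p (Suc i)) w" "Stp w (p (Suc (Suc i)))"
        using move[OF pin[of "Suc i"] pin[of "Suc (Suc i)", THEN subsetD[OF R23]] d] Suc.prems by auto
      then show ?case using IH by (meson tranclp.trancl_into_trancl)
    qed
    from this[of "n - 1"] show ?thesis using n(1) pn by simp
  qed
  define \<theta>1 where "\<theta>1 = (c0/2) / real (card F)"
  define \<theta> where "\<theta> = min \<theta>1 (min (c0/2) \<theta>2)"
  have cF: "card F > 0" using F(1) Fne by (simp add: card_gt_0_iff)
  have \<theta>pos: "\<theta> > 0" unfolding \<theta>_def \<theta>1_def using c0(1) \<theta>2 cF by auto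
  show ?thesis
  proof (rule exI[of _ c0], rule conjI[OF c0(1)], rule exI[of _ \<theta>], rule conjI[OF \<theta>pos], rule conjI)
   show "\<forall>y\<in>\<Omega>. c0 \<le> measure \<nu> {z. \<delta> < dist y z \<and> dist y z < \<epsilon>}"
   proof
    fix y assume y: "y \<in> \<Omega>"
    have yx: "dist x0 y < R0" using y R0(2) by auto
    have "0 \<le> d0" unfolding d0_def by simp
    then have yR2: "y \<in> cball x0 R2" using yx R0(1) unfolding R2_def by simp
    then obtain w where w: "\<delta>+\<gamma> < dist y w" "dist y w < \<epsilon>-\<gamma>" using \<gamma>(2) by blast
    have "dist x0 w \<le> dist x0 y + dist y w" by (rule dist_triangle)
    then have wR3: "w \<in> cball x0 R3" using yR2 w \<gamma>(1) unfolding R3_def by simp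
    have "ball w \<rho> \<subseteq> {z. \<delta> < dist y z \<and> dist y z < \<epsilon>}"
    proof
      fix z assume z: "z \<in> ball w \<rho>"
      have "dist y w \<le> dist y z + dist w z" using dist_triangle[of y w z] by (simp add: dist_commute)
      moreover have "dist y z \<le> dist y w + dist w z" by (rule dist_triangle)
      ultimately show "z \<in> {z. \<delta> < dist y z \<and> dist y z < \<epsilon>}" using z w \<rho> by auto
    qed
    then have "measure \<nu> (ball w \<rho>) \<le> measure \<nu> {z. \<delta> < dist y z \<and> dist y z < \<epsilon>}"
      by (intro finite_measure_mono) (auto simp: sb)
    then show "c0 \<le> measure \<nu> {z. \<delta> < dist y z \<and> dist y z < \<epsilon>}" using c0m wR3 by fastforce
   qed
  next
   show "\<forall>S\<in>sets borel. S \<subseteq> \<Omega> \<longrightarrow> c0/2 \<le> measure \<nu> S \<longrightarrow>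
        (\<exists>Y\<in>sets borel. Y \<subseteq> S \<and> \<theta> \<le> measure \<nu> Y \<and>
           (\<forall>y\<in>Y. \<theta> \<le> measure \<nu> ({z. \<delta> < dist y z \<and> dist y z < \<epsilon>} - S)))"
   proof (intro ballI impI)
    fix S :: "'a set" assume S: "S \<in> sets borel" and SO: "S \<subseteq> \<Omega>" and Sm: "c0/2 \<le> measure \<nu> S"
    have "\<exists>a\<in>F. \<theta>1 \<le> measure \<nu> (ball a \<rho> \<inter> S)"
    proof (rule ccontr)
      assume "\<not> ?thesis"
      then have lt: "\<And>a. a \<in> F \<Longrightarrow> measure \<nu> (ball a \<rho> \<inter> S) < \<theta>1" by auto
      have Un: "(\<Union>a\<in>F. ball a \<rho> \<inter> S) \<in> sets \<nu>"
        using F(1) S by (intro sets.finite_UN) (auto simp: sb)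
      have "S \<subseteq> (\<Union>a\<in>F. ball a \<rho> \<inter> S)" using SO F(3) by blast
      then have "measure \<nu> S \<le> measure \<nu> (\<Union>a\<in>F. ball a \<rho> \<inter> S)"
        using Un by (rule finite_measure_mono)
      also have "\<dots> \<le> (\<Sum>a\<in>F. measure \<nu> (ball a \<rho> \<inter> S))"
        using F(1) S by (intro finite_measure_subadditive_finite) (auto simp: sb)
      also have "\<dots> < (\<Sum>a\<in>F. \<theta>1)" using F(1) Fne lt by (intro sum_strict_mono) auto
      also have "\<dots> = c0/2" using cF unfolding \<theta>1_def by simp
      finally show False using Sm by simp
    qed
    then obtain a where a: "a \<in> F" "\<theta>1 \<le> measure \<nu> (ball a \<rho> \<inter> S)" by blast
    have aO: "a \<in> \<Omega>" using a F(2) by auto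
    have thc: "\<theta> \<le> c0/2" unfolding \<theta>_def by simp
    have tha: "\<theta> \<le> measure \<nu> (ball a \<rho> \<inter> S)" using a(2) unfolding \<theta>_def by simp
    have SW: "\<And>x y. Stp x y \<Longrightarrow> y \<in> cball x0 R3" unfolding Stp_def by simp
    have cg: "(\<exists>x x'. Stp x x' \<and> \<theta> \<le> measure \<nu> (ball x \<rho> \<inter> S) \<and> \<theta> \<le> measure \<nu> (ball x' \<rho> - S))
         \<or> measure \<nu> (ball b \<rho> - S) < \<theta>"
      by (rule chain_good[OF finite_measure_axioms sb S chain[OF aO] SW c0m thc tha])
    have "measure \<nu> (ball b \<rho> - \<Omega>) \<le> measure \<nu> (ball b \<rho> - S)"
      using SO S by (intro finite_measure_mono) (auto simp: sb)
    then have "\<theta> \<le> measure \<nu> (ball b \<rho> - S)" unfolding \<theta>_def \<theta>2_def by linarith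
    then obtain x x' where xx: "Stp x x'" "\<theta> \<le> measure \<nu> (ball x \<rho> \<inter> S)" "\<theta> \<le> measure \<nu> (ball x' \<rho> - S)"
      using cg by auto
    show "\<exists>Y\<in>sets borel. Y \<subseteq> S \<and> \<theta> \<le> measure \<nu> Y \<and>
           (\<forall>y\<in>Y. \<theta> \<le> measure \<nu> ({z. \<delta> < dist y z \<and> dist y z < \<epsilon>} - S))"
    proof (intro bexI[of _ "ball x \<rho> \<inter> S"] conjI ballI)
      show "ball x \<rho> \<inter> S \<in> sets borel" using S by simp
      show "ball x \<rho> \<inter> S \<subseteq> S" by blast
      show "\<theta> \<le> measure \<nu> (ball x \<rho> \<inter> S)" by (rule xx(2))
      fix y assume y: "y \<in> ball x \<rho> \<inter> S"
      have "ball x' \<rho> \<subseteq> {z. \<delta> < dist y z \<and> dist y z < \<epsilon>}"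
      proof
        fix z assume z: "z \<in> ball x' \<rho>"
        have t1: "dist x x' \<le> dist x y + dist y z + dist x' z"
          using dist_triangle[of x x' y] dist_triangle[of y x' z] by (simp add: dist_commute)
        have t2: "dist y z \<le> dist y x + dist x x' + dist x' z"
          using dist_triangle[of y z x] dist_triangle[of x z x'] by (simp add: dist_commute)
        show "z \<in> {z. \<delta> < dist y z \<and> dist y z < \<epsilon>}"
          using t1 t2 xx(1) y z unfolding Stp_def by (auto simp: dist_commute)
      qed
      then have "measure \<nu> (ball x' \<rho> - S) \<le> measure \<nu> ({z. \<delta> < dist y z \<and> dist y z < \<epsilon>} - S)"
        using S by (intro finite_measure_mono) (auto simp: sb)
      then show "\<theta> \<le> measure \<nu> ({z. \<delta> < dist y z \<and> dist y z < \<epsilon>} - S)" using xx(3) by linarith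
    qed
   qed
  qed
qed

lemma pow_tri:
  fixes a b p :: real
  assumes "0 \<le> p"
  shows "\<bar>a\<bar> powr p \<le> 2 powr p * (\<bar>b - a\<bar> powr p + \<bar>b\<bar> powr p)"
proof -
  define M where "M = max \<bar>b - a\<bar> \<bar>b\<bar>"
  have "\<bar>a\<bar> \<le> 2 * M" unfolding M_def by (smt (verit))
  then have "\<bar>a\<bar> powr p \<le> (2 * M) powr p" using assms by (intro powr_mono2) auto
  also have "\<dots> = 2 powr p * M powr p" by (simp add: M_def powr_mult)
  also have "M powr p \<le> \<bar>b - a\<bar> powr p + \<bar>b\<bar> powr p" unfolding M_def
    by (cases "\<bar>b - a\<bar> \<le> \<bar>b\<bar>") (auto simp: max_def)
  then have "2 powr p * M powr p \<le> 2 powr p * (\<bar>b - a\<bar> powr p + \<bar>b\<bar> powr p)"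
    by (intro mult_left_mono) auto
  finally show ?thesis .
qed

lemma kernel_compare:
  fixes Mx \<nu> :: "'a::topological_space measure"
  assumes sM: "sets Mx = sets borel" and sb: "sets \<nu> = sets borel" and Kb: "Kx \<in> sets borel"
    and low: "\<forall>A\<in>sets borel. ennreal \<beta> * emeasure \<nu> (A \<inter> Kx) \<le> emeasure Mx A"
    and h: "h \<in> borel_measurable borel" and \<beta>: "\<beta> \<ge> 0"
  shows "ennreal \<beta> * (\<integral>\<^sup>+ y. h y * indicator Kx y \<partial>\<nu>) \<le> (\<integral>\<^sup>+ y. h y \<partial>Mx)"
proof -
  define N where "N = density \<nu> (\<lambda>y. ennreal \<beta> * indicator Kx y)"
  have gm: "(\<lambda>y. ennreal \<beta> * indicator Kx y) \<in> borel_measurable \<nu>"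
    using Kb sb by (simp add: measurable_cong_sets[OF sb refl])
  have hm: "h \<in> borel_measurable \<nu>" using h by (simp add: measurable_cong_sets[OF sb refl])
  have sN: "sets N = sets borel" unfolding N_def using sb by simp
  have spN: "space N = space Mx" using sets_eq_imp_space_eq[OF sN] sets_eq_imp_space_eq[OF sM] by simp
  have eN: "emeasure N A \<le> emeasure Mx A" for A
  proof (cases "A \<in> sets borel")
    case True
    have "emeasure N A = (\<integral>\<^sup>+ y\<in>A. ennreal \<beta> * indicator Kx y \<partial>\<nu>)"
      unfolding N_def using True sb gm by (simp add: emeasure_density)
    also have "\<dots> = (\<integral>\<^sup>+ y. ennreal \<beta> * indicator (A \<inter> Kx) y \<partial>\<nu>)"
      by (intro nn_integral_cong) (auto split: split_indicator)
    also have "\<dots> = ennreal \<beta> * emeasure \<nu> (A \<inter> Kx)"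
      using True Kb sb by (intro nn_integral_cmult_indicator) auto
    also have "\<dots> \<le> emeasure Mx A" using low True by blast
    finally show ?thesis .
  next
    case False
    then have "A \<notin> sets N" using sN by simp
    then show ?thesis by (simp add: emeasure_notin_sets)
  qed
  have le: "N \<le> Mx" unfolding le_measure_iff using spN sN sM eN by (auto simp: le_fun_def)
  have "ennreal \<beta> * (\<integral>\<^sup>+ y. h y * indicator Kx y \<partial>\<nu>) = (\<integral>\<^sup>+ y. ennreal \<beta> * (h y * indicator Kx y) \<partial>\<nu>)"
    using hm Kb sb by (intro nn_integral_cmult[symmetric]) (simp add: measurable_cong_sets[OF sb refl])
  also have "\<dots> = (\<integral>\<^sup>+ y. (ennreal \<beta> * indicator Kx y) * h y \<partial>\<nu>)"
    by (intro nn_integral_cong) (simp add: ac_simps)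
  also have "\<dots> = (\<integral>\<^sup>+ y. h y \<partial>N)"
    unfolding N_def using gm hm by (intro nn_integral_density[symmetric]) auto
  also have "\<dots> \<le> (\<integral>\<^sup>+ y. h y \<partial>Mx)"
    using le sN sM by (intro nn_integral_mono_measure) auto
  finally show ?thesis .
qed

lemma emK:
  fixes \<nu> :: "'a::polish_space measure"
  assumes sb: "sets \<nu> = sets borel" and fm: "finite_measure \<nu>" and L: "L \<in> sets borel"
  shows "emeasure \<nu> ({y. \<delta> < dist x y \<and> dist x y < \<epsilon>} \<inter> L) =
           (\<integral>\<^sup>+ y. indicator {y. \<delta> < dist x y \<and> dist x y < \<epsilon>} y * indicator L y \<partial>\<nu>)"
    and "(\<lambda>x. emeasure \<nu> ({y. \<delta> < dist x y \<and> dist x y < \<epsilon>} \<inter> L)) \<in> borel_measurable \<nu>"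
proof -
  interpret finite_measure \<nu> by (rule fm)
  note sb[measurable_cong] L[measurable]
  have eq: "emeasure \<nu> ({y. \<delta> < dist x y \<and> dist x y < \<epsilon>} \<inter> L) =
           (\<integral>\<^sup>+ y. indicator {y. \<delta> < dist x y \<and> dist x y < \<epsilon>} y * indicator L y \<partial>\<nu>)" for x
  proof -
    have "emeasure \<nu> ({y. \<delta> < dist x y \<and> dist x y < \<epsilon>} \<inter> L) =
       (\<integral>\<^sup>+ y. indicator ({y. \<delta> < dist x y \<and> dist x y < \<epsilon>} \<inter> L) y \<partial>\<nu>)"
      by (intro nn_integral_indicator[symmetric]) (simp add: sb)
    then show ?thesis by (simp add: indicator_inter_arith)
  qed
  then show "emeasure \<nu> ({y. \<delta> < dist x y \<and> dist x y < \<epsilon>} \<inter> L) =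
           (\<integral>\<^sup>+ y. indicator {y. \<delta> < dist x y \<and> dist x y < \<epsilon>} y * indicator L y \<partial>\<nu>)" .
  have "(\<lambda>x. \<integral>\<^sup>+ y. indicator {y. \<delta> < dist x y \<and> dist x y < \<epsilon>} y * indicator L y \<partial>\<nu>) \<in> borel_measurable \<nu>"
    by measurable
  then show "(\<lambda>x. emeasure \<nu> ({y. \<delta> < dist x y \<and> dist x y < \<epsilon>} \<inter> L)) \<in> borel_measurable \<nu>"
    by (simp only: eq)
qed

lemma sym_null:
  fixes \<nu> :: "'a::polish_space measure"
  assumes sb: "sets \<nu> = sets borel" and fm: "finite_measure \<nu>" and Om: "\<Omega> \<in> sets borel"
    and Nb: "N \<in> sets borel"
    and Nz: "\<forall>y\<in>N. emeasure \<nu> ({z. \<delta> < dist y z \<and> dist y z < \<epsilon>} \<inter> \<Omega>) = 0"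
  shows "AE x in \<nu>. x \<in> \<Omega> \<longrightarrow> emeasure \<nu> ({z. \<delta> < dist x z \<and> dist x z < \<epsilon>} \<inter> N) = 0"
proof -
  interpret finite_measure \<nu> by (rule fm)
  interpret pair_sigma_finite \<nu> \<nu> by (simp add: pair_sigma_finite_def sigma_finite_measure_axioms)
  note sb[measurable_cong] Om[measurable] Nb[measurable]
  define K where "K x = {z. \<delta> < dist x z \<and> dist x z < \<epsilon>}" for x :: 'a
  have Ksym: "indicator (K x) y = (indicator (K y) x :: ennreal)" for x y
    unfolding K_def by (simp add: dist_commute indicator_def)
  have mK: "(\<lambda>x. emeasure \<nu> (K x \<inter> L)) \<in> borel_measurable \<nu>" if "L \<in> sets borel" for L
    unfolding K_def using emK(2)[OF sb fm that] .
  have "(\<integral>\<^sup>+ x. indicator \<Omega> x * emeasure \<nu> (K x \<inter> N) \<partial>\<nu>) =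
        (\<integral>\<^sup>+ x. (\<integral>\<^sup>+ y. indicator \<Omega> x * (indicator (K x) y * indicator N y) \<partial>\<nu>) \<partial>\<nu>)"
  proof (intro nn_integral_cong)
    fix x
    have "emeasure \<nu> (K x \<inter> N) = (\<integral>\<^sup>+ y. indicator (K x) y * indicator N y \<partial>\<nu>)"
      unfolding K_def by (rule emK(1)[OF sb fm Nb])
    then show "indicator \<Omega> x * emeasure \<nu> (K x \<inter> N) = (\<integral>\<^sup>+ y. indicator \<Omega> x * (indicator (K x) y * indicator N y) \<partial>\<nu>)"
      by (simp add: nn_integral_cmult K_def)
  qed
  also have "\<dots> = (\<integral>\<^sup>+ y. (\<integral>\<^sup>+ x. indicator \<Omega> x * (indicator (K x) y * indicator N y) \<partial>\<nu>) \<partial>\<nu>)"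
    by (intro Fubini'[symmetric]) (simp add: K_def)
  also have "\<dots> = (\<integral>\<^sup>+ y. indicator N y * emeasure \<nu> (K y \<inter> \<Omega>) \<partial>\<nu>)"
  proof (intro nn_integral_cong)
    fix y
    have "emeasure \<nu> (K y \<inter> \<Omega>) = (\<integral>\<^sup>+ x. indicator (K y) x * indicator \<Omega> x \<partial>\<nu>)"
      unfolding K_def by (rule emK(1)[OF sb fm Om])
    have "(\<integral>\<^sup>+ x. indicator \<Omega> x * (indicator (K x) y * indicator N y) \<partial>\<nu>) =
          (\<integral>\<^sup>+ x. indicator N y * (indicator (K y) x * indicator \<Omega> x) \<partial>\<nu>)"
      by (intro nn_integral_cong) (simp only: Ksym ac_simps)
    also have "\<dots> = indicator N y * (\<integral>\<^sup>+ x. indicator (K y) x * indicator \<Omega> x \<partial>\<nu>)"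
      by (rule nn_integral_cmult) (simp add: K_def)
    finally show "(\<integral>\<^sup>+ x. indicator \<Omega> x * (indicator (K x) y * indicator N y) \<partial>\<nu>) = indicator N y * emeasure \<nu> (K y \<inter> \<Omega>)"
      using \<open>emeasure \<nu> (K y \<inter> \<Omega>) = _\<close> by simp
  qed
  also have "\<dots> = (\<integral>\<^sup>+ y. 0 \<partial>\<nu>)"
    using Nz unfolding K_def by (intro nn_integral_cong) (auto split: split_indicator)
  finally have "(\<integral>\<^sup>+ x. indicator \<Omega> x * emeasure \<nu> (K x \<inter> N) \<partial>\<nu>) = 0" by simp
  moreover have "(\<lambda>x. indicator \<Omega> x * emeasure \<nu> (K x \<inter> N)) \<in> borel_measurable \<nu>"
    using mK[OF Nb] by measurable
  ultimately have "AE x in \<nu>. indicator \<Omega> x * emeasure \<nu> (K x \<inter> N) = 0"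
    by (simp add: nn_integral_0_iff_AE)
  then show ?thesis unfolding K_def[symmetric] by eventually_elim (auto split: split_indicator)
qed

lemma beta_low:
  fixes \<alpha> e k MU :: real
  assumes "\<alpha> > 0" "0 \<le> e" "e \<le> k" "k \<le> MU" "MU > 0"
  shows "ennreal (\<alpha>/MU) * ennreal e \<le> ennreal \<alpha> * ennreal e / ennreal k"
proof (cases "k = 0")
  case True
  then have "e = 0" using assms by simp
  then show ?thesis by simp
next
  case False
  then have kp: "k > 0" using assms by simp
  have "ennreal \<alpha> * ennreal e / ennreal k = ennreal (\<alpha> * e / k)"
    using assms kp by (simp add: ennreal_mult[symmetric] divide_ennreal)
  moreover have "ennreal (\<alpha>/MU) * ennreal e = ennreal (\<alpha> * e / MU)"
    using assms by (simp add: ennreal_mult[symmetric])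
  moreover have "\<alpha> * e / MU \<le> \<alpha> * e / k"
    using assms kp by (intro divide_left_mono) auto
  ultimately show ?thesis by (simp add: ennreal_leI)
qed

lemma ennreal_div_le:
  fixes \<theta> :: real
  assumes "\<theta> > 0" "ennreal \<theta> * x \<le> y"
  shows "x \<le> ennreal (1/\<theta>) * y"
proof -
  have "x = ennreal (1/\<theta>) * (ennreal \<theta> * x)"
    using assms(1) by (simp add: mult.assoc[symmetric] ennreal_mult[symmetric])
  also have "\<dots> \<le> ennreal (1/\<theta>) * y" using assms(2) by (intro mult_left_mono) auto
  finally show ?thesis .
qed

lemma layering:
  fixes \<nu> :: "'a::polish_space measure" and K :: "'a \<Rightarrow> 'a set"
  assumes fm: "finite_measure \<nu>" and sb: "sets \<nu> = sets borel"
    and Om: "\<Omega> \<in> sets borel" and \<Gamma>b: "\<Gamma> \<in> sets borel"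
    and \<Omega>'b: "\<Omega>' \<in> sets borel" and \<Omega>'\<Omega>: "\<Omega>' \<subseteq> \<Omega>" and null: "measure \<nu> (\<Omega> - \<Omega>') = 0"
    and \<Omega>'N: "\<forall>y\<in>\<Omega>'. measure \<nu> (K y \<inter> (UNIV - (\<Omega> \<union> \<Gamma>))) = 0"
    and c0: "\<forall>y\<in>\<Omega>. c0 \<le> measure \<nu> (K y)" and th: "\<theta> > 0" "\<theta> \<le> c0/2"
    and GL: "\<forall>S\<in>sets borel. S \<subseteq> \<Omega> \<longrightarrow> c0/2 \<le> measure \<nu> S \<longrightarrow>
        (\<exists>Y\<in>sets borel. Y \<subseteq> S \<and> \<theta> \<le> measure \<nu> Y \<and> (\<forall>y\<in>Y. \<theta> \<le> measure \<nu> (K y - S)))"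
    and Kb: "\<And>y. K y \<in> sets borel"
    and Tb: "\<And>L. L \<in> sets borel \<Longrightarrow> {x\<in>\<Omega>'. \<theta> \<le> measure \<nu> (K x \<inter> L)} \<in> sets borel"
  shows "\<exists>k0. \<Omega>' \<subseteq> rec_nat \<Gamma> (\<lambda>k L. L \<union> {x\<in>\<Omega>'. \<theta> \<le> measure \<nu> (K x \<inter> L)}) k0"
proof -
  interpret finite_measure \<nu> by (rule fm)
  define T where "T L = {x\<in>\<Omega>'. \<theta> \<le> measure \<nu> (K x \<inter> L)}" for L
  define Lk where "Lk = rec_nat \<Gamma> (\<lambda>k L. L \<union> T L)"
  have Lk0: "Lk 0 = \<Gamma>" and LkS: "Lk (Suc k) = Lk k \<union> T (Lk k)" for k by (simp_all add: Lk_def)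
  have Lkb: "Lk k \<in> sets borel" for k
  proof (induction k)
    case 0 then show ?case by (simp add: Lk0 \<Gamma>b)
  next
    case (Suc k)
    have "T (Lk k) \<in> sets borel" unfolding T_def by (rule Tb[OF Suc.IH])
    then show ?case using Suc.IH by (simp add: LkS)
  qed
  have \<Gamma>Lk: "\<Gamma> \<subseteq> Lk k" for k by (induction k) (auto simp: Lk0 LkS)
  define N where "N = UNIV - (\<Omega> \<union> \<Gamma>)"
  have Nb: "N \<in> sets borel" unfolding N_def using Om \<Gamma>b by auto
  have mem: "A \<in> sets borel \<Longrightarrow> A \<in> sets \<nu>" for A using sb by simp
  have four: "measure \<nu> A \<le> measure \<nu> A1 + measure \<nu> A2 + measure \<nu> A3 + measure \<nu> A4"
    if "A \<subseteq> A1 \<union> A2 \<union> A3 \<union> A4" "A1 \<in> sets borel" "A2 \<in> sets borel" "A3 \<in> sets borel" "A4 \<in> sets borel"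
    for A A1 A2 A3 A4
  proof -
    have "measure \<nu> A \<le> measure \<nu> (A1 \<union> A2 \<union> A3 \<union> A4)"
      using that by (intro finite_measure_mono) (auto simp: sb)
    also have "\<dots> \<le> measure \<nu> (A1 \<union> A2 \<union> A3) + measure \<nu> A4"
      using that by (intro measure_Un_le) (auto simp: sb)
    also have "measure \<nu> (A1 \<union> A2 \<union> A3) \<le> measure \<nu> (A1 \<union> A2) + measure \<nu> A3"
      using that by (intro measure_Un_le) (auto simp: sb)
    also have "measure \<nu> (A1 \<union> A2) \<le> measure \<nu> A1 + measure \<nu> A2"
      using that by (intro measure_Un_le) (auto simp: sb)
    finally show ?thesis by simp
  qed
  have dec: "\<Omega>' - Lk k = {} \<or> measure \<nu> (\<Omega>' - Lk k) \<le> measure \<nu> \<Omega> - real k * \<theta>" for k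
  proof (induction k)
    case 0
    have "measure \<nu> (\<Omega>' - Lk 0) \<le> measure \<nu> \<Omega>"
      using \<Omega>'\<Omega> Om by (intro finite_measure_mono) (auto simp: sb)
    then show ?case by simp
  next
    case (Suc k)
    define S where "S = \<Omega>' - Lk k"
    have Sb: "S \<in> sets borel" unfolding S_def using \<Omega>'b Lkb by auto
    have SO: "S \<subseteq> \<Omega>" unfolding S_def using \<Omega>'\<Omega> by auto
    have S': "\<Omega>' - Lk (Suc k) = S - T (Lk k)" unfolding S_def LkS by auto
    show ?case
    proof (cases "S = {}")
      case True then show ?thesis using S' by auto
    next
      case False
      then have IH: "measure \<nu> S \<le> measure \<nu> \<Omega> - real k * \<theta>" using Suc.IH unfolding S_def by auto
      have cov: "K y - S \<subseteq> (K y \<inter> N) \<union> (\<Omega> - \<Omega>') \<union> (K y \<inter> Lk k) \<union> {}" for y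
        using \<Gamma>Lk[of k] unfolding S_def N_def by auto
      have KN: "measure \<nu> (K y \<inter> N) = 0" if "y \<in> \<Omega>'" for y using \<Omega>'N that unfolding N_def by auto
      show ?thesis
      proof (cases "measure \<nu> S < c0/2")
        case True
        have "S \<subseteq> T (Lk k)"
        proof
          fix y assume y: "y \<in> S"
          then have y': "y \<in> \<Omega>'" "y \<in> \<Omega>" unfolding S_def using \<Omega>'\<Omega> by auto
          have "K y \<subseteq> (K y \<inter> N) \<union> (\<Omega> - \<Omega>') \<union> S \<union> (K y \<inter> Lk k)"
            using \<Gamma>Lk[of k] unfolding S_def N_def by auto
          then have "measure \<nu> (K y) \<le> measure \<nu> (K y \<inter> N) + measure \<nu> (\<Omega> - \<Omega>') + measure \<nu> S + measure \<nu> (K y \<inter> Lk k)"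
            using Kb Nb Om \<Omega>'b Sb Lkb by (intro four) auto
          then have "c0 \<le> measure \<nu> S + measure \<nu> (K y \<inter> Lk k)" using KN[OF y'(1)] null c0 y'(2) by fastforce
          then have "\<theta> \<le> measure \<nu> (K y \<inter> Lk k)" using True th by linarith
          then show "y \<in> T (Lk k)" unfolding T_def using y' by auto
        qed
        then show ?thesis using S' by auto
      next
        case False
        then obtain Y where Y: "Y \<in> sets borel" "Y \<subseteq> S" "\<theta> \<le> measure \<nu> Y" "\<forall>y\<in>Y. \<theta> \<le> measure \<nu> (K y - S)"
          using GL Sb SO by force
        have YT: "Y \<subseteq> T (Lk k)"
        proof
          fix y assume y: "y \<in> Y"
          then have y': "y \<in> \<Omega>'" using Y(2) unfolding S_def by auto
          have "measure \<nu> (K y - S) \<le> measure \<nu> (K y \<inter> N) + measure \<nu> (\<Omega> - \<Omega>') + measure \<nu> (K y \<inter> Lk k) + measure \<nu> {}"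
            using Kb Nb Om \<Omega>'b Lkb by (intro four[OF cov]) auto
          then have "\<theta> \<le> measure \<nu> (K y \<inter> Lk k)" using KN[OF y'] null Y(4) y by fastforce
          then show "y \<in> T (Lk k)" unfolding T_def using y' by auto
        qed
        have "measure \<nu> (\<Omega>' - Lk (Suc k)) \<le> measure \<nu> (S - Y)"
          unfolding S' using YT Sb Y(1) by (intro finite_measure_mono) (auto simp: sb)
        also have "\<dots> = measure \<nu> S - measure \<nu> Y"
          using Sb Y(1,2) by (intro finite_measure_Diff) (auto simp: sb)
        finally have "measure \<nu> (\<Omega>' - Lk (Suc k)) \<le> measure \<nu> \<Omega> - real (Suc k) * \<theta>"
          using IH Y(3) by (simp add: algebra_simps)
        then show ?thesis by blast
      qed
    qed
  qed
  obtain k0 :: nat where k0: "measure \<nu> \<Omega> / \<theta> < real k0" using reals_Archimedean2 by blast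
  then have "measure \<nu> \<Omega> < real k0 * \<theta>" using th(1) by (simp add: field_simps)
  then have "\<Omega>' - Lk k0 = {}" using dec[of k0] measure_nonneg[of \<nu> "\<Omega>' - Lk k0"] by linarith
  then show ?thesis unfolding Lk_def T_def by auto
qed

lemma rec_ge1:
  fixes c M :: real
  assumes "c \<ge> 0" "M \<ge> 0"
  shows "rec_nat (1::real) (\<lambda>k ak. ak + c * (1 + M * ak)) k \<ge> 1"
proof (induction k)
  case 0 then show ?case by simp
next
  case (Suc k)
  have "0 \<le> c * (1 + M * rec_nat (1::real) (\<lambda>k ak. ak + c * (1 + M * ak)) k)"
    using assms Suc by simp
  then show ?case using Suc by simp
qed

lemma final_ineq:
  fixes \<nu> :: "'a::polish_space measure" and m :: "'a \<Rightarrow> 'a measure"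
    and T :: "'a set \<Rightarrow> 'a set" and Lk :: "nat \<Rightarrow> 'a set" and u \<psi> :: "'a \<Rightarrow> real"
    and p \<theta> \<beta> \<delta> \<epsilon> :: real
  assumes fm: "finite_measure \<nu>" and sb: "sets \<nu> = sets borel" and msets: "\<And>x. sets (m x) = sets borel"
    and Om[measurable]: "\<Omega> \<in> sets borel" and \<Gamma>b[measurable]: "\<Gamma> \<in> sets borel" and \<Gamma>\<Omega>: "\<Gamma> \<inter> \<Omega> = {}"
    and \<Omega>'null: "\<Omega> - \<Omega>' \<in> null_sets \<nu>" and \<Omega>'\<Omega>: "\<Omega>' \<subseteq> \<Omega>" and \<Omega>'b[measurable]: "\<Omega>' \<in> sets borel"
    and Lk0: "Lk 0 = \<Gamma>" and LkS: "\<And>k. Lk (Suc k) = Lk k \<union> T (Lk k)"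
    and Lkb: "\<And>k. Lk k \<in> sets borel" and LkG: "\<And>k. Lk k \<subseteq> \<Omega> \<union> \<Gamma>" and k0: "\<Omega>' \<subseteq> Lk k0"
    and Tsub: "\<And>L. T L \<subseteq> {x\<in>\<Omega>. \<theta> \<le> measure \<nu> ({y. \<delta> < dist x y \<and> dist x y < \<epsilon>} \<inter> L)}"
    and Tb: "\<And>L. L \<in> sets borel \<Longrightarrow> T L \<in> sets borel"
    and th: "\<theta> > 0" and \<beta>: "\<beta> > 0" and p: "p \<ge> 1"
    and low: "\<forall>x\<in>\<Omega>. \<forall>A\<in>sets borel. ennreal \<beta> * emeasure \<nu> (A \<inter> {y. \<delta> < dist x y \<and> dist x y < \<epsilon>}) \<le> emeasure (m x) A"
    and u[measurable]: "u \<in> borel_measurable borel" and \<psi>[measurable]: "\<psi> \<in> borel_measurable borel"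
  shows "ennreal (1 / (rec_nat (1::real) (\<lambda>k ak. ak + (2 powr p / \<theta>) * (1 + measure \<nu> \<Omega> * ak)) k0 * max (1/\<beta>) 1))
           * (\<integral>\<^sup>+ x\<in>\<Omega>. ennreal (\<bar>u x\<bar> powr p) \<partial>\<nu>)
         \<le> (\<integral>\<^sup>+ x\<in>\<Omega>. (\<integral>\<^sup>+ y\<in>\<Omega> \<union> \<Gamma>. ennreal (\<bar>(if y \<in> \<Omega> then u y else \<psi> y) - u x\<bar> powr p) \<partial>m x) \<partial>\<nu>)
           + (\<integral>\<^sup>+ y\<in>\<Gamma>. ennreal (\<bar>\<psi> y\<bar> powr p) \<partial>\<nu>)"
proof -
  interpret finite_measure \<nu> by (rule fm)
  interpret pair_sigma_finite \<nu> \<nu> by (simp add: pair_sigma_finite_def sigma_finite_measure_axioms)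
  note sb[measurable_cong] Lkb[measurable]
  define K where "K x = {y. \<delta> < dist x y \<and> dist x y < \<epsilon>}" for x :: 'a
  have Kb[measurable]: "K x \<in> sets borel" for x unfolding K_def by simp
  define MO where "MO = measure \<nu> \<Omega>"
  have MO: "MO \<ge> 0" unfolding MO_def by simp
  define c where "c = 2 powr p / \<theta>"
  have cpos: "c > 0" unfolding c_def using th by simp
  define a where "a = rec_nat (1::real) (\<lambda>k ak. ak + c * (1 + MO * ak))"
  have a0: "a 0 = 1" and aS: "a (Suc k) = a k + c * (1 + MO * a k)" for k by (simp_all add: a_def)
  have apos: "a k \<ge> 1" for k
  proof (induction k)
    case 0 then show ?case by (simp add: a0)
  next
    case (Suc k)
    have "0 \<le> c * (1 + MO * a k)" using cpos MO Suc by simp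
    then show ?case using Suc by (simp add: aS)
  qed
  define Mx where "Mx = max (1/\<beta>) 1"
  have Mx: "Mx \<ge> 1" "Mx \<ge> 1/\<beta>" unfolding Mx_def by auto
  define f where "f y = (if y \<in> \<Omega> then u y else \<psi> y)" for y
  have f[measurable]: "f \<in> borel_measurable borel" unfolding f_def by measurable
  define F where "F y = ennreal (\<bar>f y\<bar> powr p)" for y
  have F[measurable]: "F \<in> borel_measurable borel" unfolding F_def by measurable
  define h where "h x y = ennreal (\<bar>f y - f x\<bar> powr p) * indicator (\<Omega> \<union> \<Gamma>) y" for x y
  have h[measurable]: "(\<lambda>(x, y). h x y) \<in> borel_measurable (\<nu> \<Otimes>\<^sub>M \<nu>)" unfolding h_def by measurable
  define Dx where "Dx x = (\<integral>\<^sup>+ y. h x y * indicator (K x) y \<partial>\<nu>)" for x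
  have Dx[measurable]: "Dx \<in> borel_measurable \<nu>" unfolding Dx_def K_def h_def by measurable
  define D where "D = (\<integral>\<^sup>+ x. Dx x * indicator \<Omega> x \<partial>\<nu>)"
  define E where "E = (\<integral>\<^sup>+ x\<in>\<Omega>. (\<integral>\<^sup>+ y\<in>\<Omega> \<union> \<Gamma>. ennreal (\<bar>(if y \<in> \<Omega> then u y else \<psi> y) - u x\<bar> powr p) \<partial>m x) \<partial>\<nu>)"
  define B where "B = (\<integral>\<^sup>+ y\<in>\<Gamma>. ennreal (\<bar>\<psi> y\<bar> powr p) \<partial>\<nu>)"
  define I where "I L = (\<integral>\<^sup>+ y. F y * indicator L y \<partial>\<nu>)" for L
  have E1: "ennreal \<beta> * D \<le> E"
  proof -
    have pt: "ennreal \<beta> * Dx x * indicator \<Omega> x \<le>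
        (\<integral>\<^sup>+ y\<in>\<Omega> \<union> \<Gamma>. ennreal (\<bar>(if y \<in> \<Omega> then u y else \<psi> y) - u x\<bar> powr p) \<partial>m x) * indicator \<Omega> x" for x
    proof (cases "x \<in> \<Omega>")
      case True
      have hx: "h x \<in> borel_measurable borel" unfolding h_def by measurable
      have "ennreal \<beta> * Dx x \<le> (\<integral>\<^sup>+ y. h x y \<partial>m x)"
        unfolding Dx_def
        by (rule kernel_compare[OF msets sb Kb _ hx]) (use low True \<beta> in \<open>auto simp: K_def\<close>)
      also have "\<dots> = (\<integral>\<^sup>+ y\<in>\<Omega> \<union> \<Gamma>. ennreal (\<bar>(if y \<in> \<Omega> then u y else \<psi> y) - u x\<bar> powr p) \<partial>m x)"
        unfolding h_def f_def using True by simp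
      finally show ?thesis using True by simp
    qed simp
    have "ennreal \<beta> * D = (\<integral>\<^sup>+ x. ennreal \<beta> * Dx x * indicator \<Omega> x \<partial>\<nu>)"
      unfolding D_def by (subst nn_integral_cmult[symmetric]) (auto simp: mult.assoc)
    also have "\<dots> \<le> E" unfolding E_def by (intro nn_integral_mono pt)
    finally show ?thesis .
  qed
  have E2: "(\<integral>\<^sup>+ x. F x * indicator (T L) x \<partial>\<nu>) \<le> ennreal c * (D + ennreal MO * I L)"
    if L: "L \<in> sets borel" "L \<subseteq> \<Omega> \<union> \<Gamma>" for L
  proof -
    note L(1)[measurable]
    have pt: "F x * indicator (T L) x \<le> ennreal c * ((Dx x + I L) * indicator \<Omega> x)" for x
    proof (cases "x \<in> T L")
      case True
      then have x: "x \<in> \<Omega>" "\<theta> \<le> measure \<nu> (K x \<inter> L)" using Tsub[of L] unfolding K_def by auto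
      have "ennreal \<theta> * F x \<le> emeasure \<nu> (K x \<inter> L) * F x"
        using x(2) by (intro mult_right_mono) (auto simp: emeasure_eq_measure ennreal_leI)
      also have "\<dots> = (\<integral>\<^sup>+ y. F x * indicator (K x \<inter> L) y \<partial>\<nu>)"
        by (subst nn_integral_cmult_indicator) (auto simp: mult.commute)
      also have "\<dots> \<le> (\<integral>\<^sup>+ y. ennreal (2 powr p) * (h x y * indicator (K x) y + F y * indicator L y) \<partial>\<nu>)"
      proof (intro nn_integral_mono)
        fix y
        show "F x * indicator (K x \<inter> L) y \<le> ennreal (2 powr p) * (h x y * indicator (K x) y + F y * indicator L y)"
        proof (cases "y \<in> K x \<inter> L")
          case True
          then have yG: "y \<in> \<Omega> \<union> \<Gamma>" using L(2) by auto
          have "\<bar>f x\<bar> powr p \<le> 2 powr p * (\<bar>f y - f x\<bar> powr p + \<bar>f y\<bar> powr p)"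
            using p by (intro pow_tri) auto
          then have "ennreal (\<bar>f x\<bar> powr p) \<le> ennreal (2 powr p) * (ennreal (\<bar>f y - f x\<bar> powr p) + ennreal (\<bar>f y\<bar> powr p))"
            by (simp add: ennreal_mult[symmetric] ennreal_plus[symmetric] ennreal_leI del: ennreal_plus)
          then show ?thesis using True yG unfolding F_def h_def by simp
        qed simp
      qed
      also have "\<dots> = ennreal (2 powr p) * (Dx x + I L)"
        unfolding Dx_def I_def
        by (subst nn_integral_cmult) (auto simp: K_def h_def intro!: nn_integral_add arg_cong2[where f="(*)"])
      finally have "F x \<le> ennreal (1/\<theta>) * (ennreal (2 powr p) * (Dx x + I L))"
        by (rule ennreal_div_le[OF th])
      also have "\<dots> = ennreal c * (Dx x + I L)"
        unfolding c_def using th by (simp add: mult.assoc[symmetric] ennreal_mult[symmetric] divide_inverse mult.commute)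
      finally show ?thesis using True x by simp
    qed simp
    have "(\<integral>\<^sup>+ x. F x * indicator (T L) x \<partial>\<nu>) \<le> (\<integral>\<^sup>+ x. ennreal c * ((Dx x + I L) * indicator \<Omega> x) \<partial>\<nu>)"
      by (intro nn_integral_mono pt)
    also have "\<dots> = ennreal c * (\<integral>\<^sup>+ x. Dx x * indicator \<Omega> x + I L * indicator \<Omega> x \<partial>\<nu>)"
      by (subst nn_integral_cmult) (auto simp: distrib_right)
    also have "\<dots> = ennreal c * (D + I L * emeasure \<nu> \<Omega>)"
      unfolding D_def by (subst nn_integral_add) (auto simp: nn_integral_cmult_indicator)
    also have "\<dots> = ennreal c * (D + ennreal MO * I L)"
      unfolding MO_def by (simp add: emeasure_eq_measure mult.commute)
    finally show ?thesis .
  qed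
  have E3: "I (Lk k) \<le> ennreal (a k) * (D + B)" for k
  proof (induction k)
    case 0
    have "I (Lk 0) = B" unfolding I_def B_def Lk0
      by (intro nn_integral_cong) (use \<Gamma>\<Omega> in \<open>auto simp: F_def f_def split: split_indicator\<close>)
    then show ?case by (simp add: a0 le_iff_add)
  next
    case (Suc k)
    define X where "X = D + B"
    define A where "A = ennreal (a k)"
    have "I (Lk (Suc k)) \<le> (\<integral>\<^sup>+ y. F y * indicator (Lk k) y + F y * indicator (T (Lk k)) y \<partial>\<nu>)"
      unfolding I_def LkS by (intro nn_integral_mono) (auto split: split_indicator)
    also have "\<dots> = I (Lk k) + (\<integral>\<^sup>+ x. F x * indicator (T (Lk k)) x \<partial>\<nu>)"
      unfolding I_def using Tb[OF Lkb[of k]] by (intro nn_integral_add) auto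
    also have "\<dots> \<le> I (Lk k) + ennreal c * (D + ennreal MO * I (Lk k))"
      using E2[OF Lkb LkG] by (rule add_left_mono)
    also have "\<dots> \<le> A * X + ennreal c * (X + ennreal MO * (A * X))"
      using Suc.IH unfolding A_def X_def
      by (intro add_mono mult_left_mono order.refl) (auto intro: add_increasing2)
    also have "\<dots> = ennreal (a (Suc k)) * X"
    proof -
      have "ennreal (a (Suc k)) = A + ennreal c * (1 + ennreal MO * A)"
      proof -
        have n1: "0 \<le> a k" "0 \<le> MO * a k" "0 \<le> 1 + MO * a k" "0 \<le> c * (1 + MO * a k)"
          using apos[of k] cpos MO by auto
        have "ennreal (a (Suc k)) = ennreal (a k) + ennreal (c * (1 + MO * a k))"
          unfolding aS by (rule ennreal_plus[OF n1(1) n1(4)])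
        also have "ennreal (c * (1 + MO * a k)) = ennreal c * ennreal (1 + MO * a k)"
          using cpos n1 by (intro ennreal_mult) auto
        also have "ennreal (1 + MO * a k) = 1 + ennreal MO * ennreal (a k)"
          using n1 MO by (simp add: ennreal_mult)
        finally show ?thesis unfolding A_def .
      qed
      then show ?thesis by (simp add: algebra_simps)
    qed
    finally show ?case unfolding X_def .
  qed
  have "(\<integral>\<^sup>+ x\<in>\<Omega>. ennreal (\<bar>u x\<bar> powr p) \<partial>\<nu>) = (\<integral>\<^sup>+ x. F x * indicator \<Omega> x \<partial>\<nu>)"
    by (intro nn_integral_cong) (auto simp: F_def f_def split: split_indicator)
  also have "\<dots> = (\<integral>\<^sup>+ x. F x * indicator \<Omega>' x \<partial>\<nu>)"
  proof (intro nn_integral_cong_AE)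
    show "AE x in \<nu>. F x * indicator \<Omega> x = F x * indicator \<Omega>' x"
      using AE_not_in[OF \<Omega>'null] by eventually_elim (use \<Omega>'\<Omega> in \<open>auto split: split_indicator\<close>)
  qed
  also have "\<dots> \<le> I (Lk k0)" unfolding I_def
    using k0 by (intro nn_integral_mono) (auto split: split_indicator)
  also have "\<dots> \<le> ennreal (a k0) * (D + B)" by (rule E3)
  also have "\<dots> \<le> ennreal (a k0) * (ennreal Mx * E + ennreal Mx * B)"
  proof (intro mult_left_mono add_mono)
    have "D \<le> ennreal (1/\<beta>) * E" by (rule ennreal_div_le[OF \<beta> E1])
    also have "\<dots> \<le> ennreal Mx * E" using Mx by (intro mult_right_mono) (auto intro: ennreal_leI)
    finally show "D \<le> ennreal Mx * E" .
    have "B = ennreal 1 * B" by simp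
    also have "\<dots> \<le> ennreal Mx * B" using Mx by (intro mult_right_mono) (auto intro: ennreal_leI)
    finally show "B \<le> ennreal Mx * B" .
  qed auto
  also have "\<dots> = ennreal (a k0 * Mx) * (E + B)"
    using apos[of k0] Mx by (simp add: ennreal_mult algebra_simps)
  finally have main: "(\<integral>\<^sup>+ x\<in>\<Omega>. ennreal (\<bar>u x\<bar> powr p) \<partial>\<nu>) \<le> ennreal (a k0 * Mx) * (E + B)" .
  have "ennreal (1 / (a k0 * Mx)) * (\<integral>\<^sup>+ x\<in>\<Omega>. ennreal (\<bar>u x\<bar> powr p) \<partial>\<nu>)
        \<le> ennreal (1 / (a k0 * Mx)) * (ennreal (a k0 * Mx) * (E + B))"
    by (intro mult_left_mono main) auto
  also have "\<dots> = E + B"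
    using apos[of k0] Mx by (simp add: mult.assoc[symmetric] ennreal_mult[symmetric])
  finally show ?thesis unfolding a_def c_def MO_def Mx_def E_def B_def .
qed

lemma core:
  fixes m :: "'a::polish_space \<Rightarrow> 'a measure" and \<nu> :: "'a measure" and \<Omega> :: "'a set"
    and \<alpha> \<delta> \<epsilon> p :: real
  assumes mrw: "metric_random_walk_space m" and sb: "sets \<nu> = sets borel"
    and fin: "emeasure \<nu> UNIV < \<infinity>" and ls: "length_space TYPE('a)" and dbl: "doubling \<nu>"
    and Om: "\<Omega> \<in> sets borel" and bO: "bounded \<Omega>"
    and Opos: "0 < emeasure \<nu> \<Omega>" and Olt: "emeasure \<nu> \<Omega> < emeasure \<nu> UNIV"
    and \<alpha>: "\<alpha> > 0" and Kne: "\<forall>x::'a. \<exists>w. \<delta> < dist x w \<and> dist x w < \<epsilon>"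
    and mlow: "\<forall>x. \<forall>A\<in>sets borel. ennreal \<alpha> * emeasure \<nu> (A \<inter> {y. \<delta> < dist x y \<and> dist x y < \<epsilon>})
                   / emeasure \<nu> {y. \<delta> < dist x y \<and> dist x y < \<epsilon>} \<le> emeasure (m x) A"
    and p: "p \<ge> 1"
  shows "poincare_ineq m \<nu> \<Omega> p"
proof -
  have sp: "space \<nu> = UNIV" using sets_eq_imp_space_eq[OF sb] by simp
  interpret finite_measure \<nu> by (rule finite_measureI) (use fin sp in auto)
  note sb[measurable_cong] Om[measurable]
  define K where "K x = {y. \<delta> < dist x y \<and> dist x y < \<epsilon>}" for x :: 'a
  have Kb[measurable]: "K x \<in> sets borel" for x unfolding K_def by simp
  obtain c0 \<theta>0 where c0: "c0 > 0" "\<theta>0 > 0" "\<forall>y\<in>\<Omega>. c0 \<le> measure \<nu> (K y)"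
    and GL0: "\<forall>S\<in>sets borel. S \<subseteq> \<Omega> \<longrightarrow> c0/2 \<le> measure \<nu> S \<longrightarrow>
        (\<exists>Y\<in>sets borel. Y \<subseteq> S \<and> \<theta>0 \<le> measure \<nu> Y \<and> (\<forall>y\<in>Y. \<theta>0 \<le> measure \<nu> (K y - S)))"
    using geo[OF dbl sb fin ls bO Om Opos Olt Kne] unfolding K_def by blast
  define \<theta> where "\<theta> = min \<theta>0 (c0/2)"
  have th: "\<theta> > 0" "\<theta> \<le> \<theta>0" "\<theta> \<le> c0/2" unfolding \<theta>_def using c0 by auto
  have GL: "\<forall>S\<in>sets borel. S \<subseteq> \<Omega> \<longrightarrow> c0/2 \<le> measure \<nu> S \<longrightarrow>
        (\<exists>Y\<in>sets borel. Y \<subseteq> S \<and> \<theta> \<le> measure \<nu> Y \<and> (\<forall>y\<in>Y. \<theta> \<le> measure \<nu> (K y - S)))"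
  proof (intro ballI impI)
    fix S :: "'a set" assume "S \<in> sets borel" "S \<subseteq> \<Omega>" "c0/2 \<le> measure \<nu> S"
    then obtain Y where "Y \<in> sets borel" "Y \<subseteq> S" "\<theta>0 \<le> measure \<nu> Y" "\<forall>y\<in>Y. \<theta>0 \<le> measure \<nu> (K y - S)"
      using GL0 by blast
    then show "\<exists>Y\<in>sets borel. Y \<subseteq> S \<and> \<theta> \<le> measure \<nu> Y \<and> (\<forall>y\<in>Y. \<theta> \<le> measure \<nu> (K y - S))"
      using th(2) by (intro bexI[of _ Y]) force+
  qed
  define MU where "MU = measure \<nu> UNIV"
  define MO where "MO = measure \<nu> \<Omega>"
  have MOp: "MO > 0" using Opos unfolding MO_def by (simp add: emeasure_eq_measure)
  have MOU: "MO \<le> MU" unfolding MO_def MU_def by (intro finite_measure_mono) auto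
  have MU: "MU > 0" using MOp MOU by simp
  define \<beta> where "\<beta> = \<alpha> / MU"
  have \<beta>: "\<beta> > 0" unfolding \<beta>_def using \<alpha> MU by simp
  have msets: "sets (m x) = sets borel" for x using mrw unfolding metric_random_walk_space_def by blast
  have mmeas[measurable]: "(\<lambda>x. emeasure (m x) \<Omega>) \<in> borel_measurable borel"
    using mrw Om unfolding metric_random_walk_space_def by blast
  define \<Gamma> where "\<Gamma> = m_boundary m \<Omega>"
  have \<Gamma>eq: "\<Gamma> = {x. x \<notin> \<Omega> \<and> 0 < emeasure (m x) \<Omega>}" unfolding \<Gamma>_def m_boundary_def by simp
  have \<Gamma>b[measurable]: "\<Gamma> \<in> sets borel" unfolding \<Gamma>eq by measurable
  define N where "N = UNIV - (\<Omega> \<union> \<Gamma>)"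
  have Nb[measurable]: "N \<in> sets borel" unfolding N_def by measurable
  have Nz: "\<forall>y\<in>N. emeasure \<nu> ({z. \<delta> < dist y z \<and> dist y z < \<epsilon>} \<inter> \<Omega>) = 0"
  proof
    fix y assume "y \<in> N"
    then have "emeasure (m y) \<Omega> = 0" unfolding N_def \<Gamma>eq by (auto simp: not_less)
    moreover have "ennreal \<alpha> * emeasure \<nu> (\<Omega> \<inter> K y) / emeasure \<nu> (K y) \<le> emeasure (m y) \<Omega>"
      using mlow Om unfolding K_def by blast
    ultimately have "ennreal \<alpha> * emeasure \<nu> (\<Omega> \<inter> K y) / emeasure \<nu> (K y) = 0" by simp
    then have "ennreal \<alpha> * emeasure \<nu> (\<Omega> \<inter> K y) = 0"
      by (simp add: ennreal_divide_eq_0_iff emeasure_eq_measure)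
    then show "emeasure \<nu> ({z. \<delta> < dist y z \<and> dist y z < \<epsilon>} \<inter> \<Omega>) = 0"
      using \<alpha> unfolding K_def by (simp add: Int_commute)
  qed
  have AEN: "AE x in \<nu>. x \<in> \<Omega> \<longrightarrow> emeasure \<nu> (K x \<inter> N) = 0"
    using sym_null[OF sb finite_measure_axioms Om Nb Nz] unfolding K_def .
  define \<Omega>' where "\<Omega>' = {x\<in>\<Omega>. emeasure \<nu> (K x \<inter> N) = 0}"
  have emKm: "(\<lambda>x. emeasure \<nu> (K x \<inter> L)) \<in> borel_measurable borel" if "L \<in> sets borel" for L
    using emK(2)[OF sb finite_measure_axioms that] unfolding K_def by (simp add: measurable_cong_sets[OF sb refl])
  have \<Omega>'b: "\<Omega>' \<in> sets borel" unfolding \<Omega>'_def using emKm[OF Nb] by measurable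
  have \<Omega>'\<Omega>: "\<Omega>' \<subseteq> \<Omega>" unfolding \<Omega>'_def by auto
  have \<Omega>'null: "\<Omega> - \<Omega>' \<in> null_sets \<nu>"
  proof -
    have "\<Omega> - \<Omega>' = {x\<in>space \<nu>. \<not> (x \<in> \<Omega> \<longrightarrow> emeasure \<nu> (K x \<inter> N) = 0)}"
      unfolding \<Omega>'_def sp by auto
    moreover have "\<Omega> - \<Omega>' \<in> sets \<nu>" using \<Omega>'b by (simp add: sb)
    ultimately show ?thesis using AEN by (simp add: AE_iff_measurable null_sets_def)
  qed
  have null: "measure \<nu> (\<Omega> - \<Omega>') = 0" using \<Omega>'null by (simp add: measure_def null_sets_def)
  have \<Omega>'N: "\<forall>y\<in>\<Omega>'. measure \<nu> (K y \<inter> (UNIV - (\<Omega> \<union> \<Gamma>))) = 0"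
    unfolding \<Omega>'_def N_def[symmetric] by (simp add: measure_def)
  have Tb: "{x\<in>\<Omega>'. \<theta> \<le> measure \<nu> (K x \<inter> L)} \<in> sets borel" if "L \<in> sets borel" for L
  proof -
    note emKm[OF that, measurable] \<Omega>'b[measurable]
    show ?thesis unfolding measure_def by measurable
  qed
  define T where "T L = {x\<in>\<Omega>'. \<theta> \<le> measure \<nu> (K x \<inter> L)}" for L
  define Lk where "Lk = rec_nat \<Gamma> (\<lambda>k L. L \<union> T L)"
  obtain k0 where k0: "\<Omega>' \<subseteq> Lk k0"
    using layering[OF finite_measure_axioms sb Om \<Gamma>b \<Omega>'b \<Omega>'\<Omega> null \<Omega>'N c0(3) th(1) th(3) GL Kb Tb]
    unfolding Lk_def T_def by blast
  have Lk0: "Lk 0 = \<Gamma>" and LkS: "Lk (Suc k) = Lk k \<union> T (Lk k)" for k by (simp_all add: Lk_def)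
  have Lkb[measurable]: "Lk k \<in> sets borel" for k
  proof (induction k)
    case 0 then show ?case by (simp add: Lk0)
  next
    case (Suc k)
    have "T (Lk k) \<in> sets borel" unfolding T_def by (rule Tb[OF Suc.IH])
    then show ?case using Suc.IH by (simp add: LkS)
  qed
  have LkG: "Lk k \<subseteq> \<Omega> \<union> \<Gamma>" for k
    by (induction k) (use \<Omega>'\<Omega> in \<open>auto simp: Lk0 LkS T_def\<close>)
  have Tb'[measurable]: "T L \<in> sets borel" if "L \<in> sets borel" for L unfolding T_def by (rule Tb[OF that])
  define lam where "lam = 1 / (rec_nat (1::real) (\<lambda>k ak. ak + (2 powr p / \<theta>) * (1 + measure \<nu> \<Omega> * ak)) k0 * max (1/\<beta>) 1)"
  have "rec_nat (1::real) (\<lambda>k ak. ak + (2 powr p / \<theta>) * (1 + measure \<nu> \<Omega> * ak)) k0 \<ge> 1"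
    using th(1) by (intro rec_ge1) auto
  moreover have "max (1/\<beta>) 1 \<ge> (1::real)" by simp
  ultimately have "0 < rec_nat (1::real) (\<lambda>k ak. ak + (2 powr p / \<theta>) * (1 + measure \<nu> \<Omega> * ak)) k0 * max (1/\<beta>) 1"
    by (intro mult_pos_pos) linarith+
  then have lam: "lam > 0" unfolding lam_def by simp
  have low: "\<forall>x\<in>\<Omega>. \<forall>A\<in>sets borel. ennreal \<beta> * emeasure \<nu> (A \<inter> {y. \<delta> < dist x y \<and> dist x y < \<epsilon>}) \<le> emeasure (m x) A"
  proof (intro ballI)
    fix x :: 'a and A :: "'a set" assume A: "A \<in> sets borel"
    have "ennreal \<beta> * emeasure \<nu> (A \<inter> K x) = ennreal (\<alpha>/MU) * ennreal (measure \<nu> (A \<inter> K x))"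
      unfolding \<beta>_def by (simp add: emeasure_eq_measure)
    also have "\<dots> \<le> ennreal \<alpha> * ennreal (measure \<nu> (A \<inter> K x)) / ennreal (measure \<nu> (K x))"
    proof (rule beta_low[OF \<alpha> measure_nonneg])
      show "measure \<nu> (A \<inter> K x) \<le> measure \<nu> (K x)" using A by (intro finite_measure_mono) (auto simp: sb)
      show "measure \<nu> (K x) \<le> MU" unfolding MU_def by (intro finite_measure_mono) auto
      show "MU > 0" by (rule MU)
    qed
    also have "\<dots> = ennreal \<alpha> * emeasure \<nu> (A \<inter> K x) / emeasure \<nu> (K x)"
      by (simp add: emeasure_eq_measure)
    also have "\<dots> \<le> emeasure (m x) A" using mlow A unfolding K_def by blast
    finally show "ennreal \<beta> * emeasure \<nu> (A \<inter> {y. \<delta> < dist x y \<and> dist x y < \<epsilon>}) \<le> emeasure (m x) A"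
      unfolding K_def .
  qed
  have \<Gamma>\<Omega>: "\<Gamma> \<inter> \<Omega> = {}" unfolding \<Gamma>eq by auto
  have Tsub: "T L \<subseteq> {x\<in>\<Omega>. \<theta> \<le> measure \<nu> ({y. \<delta> < dist x y \<and> dist x y < \<epsilon>} \<inter> L)}" for L
    unfolding T_def K_def using \<Omega>'\<Omega> by auto
  show ?thesis
    unfolding poincare_ineq_def \<Gamma>_def[symmetric]
  proof (intro exI[of _ lam] conjI lam allI impI)
    fix u \<psi> :: "'a \<Rightarrow> real"
    assume u: "u \<in> borel_measurable borel" and \<psi>: "\<psi> \<in> borel_measurable borel"
    show "ennreal lam * (\<integral>\<^sup>+ x\<in>\<Omega>. ennreal (\<bar>u x\<bar> powr p) \<partial>\<nu>) \<le>
       (\<integral>\<^sup>+ x\<in>\<Omega>. (\<integral>\<^sup>+ y\<in>\<Omega> \<union> \<Gamma>. ennreal (\<bar>(if y \<in> \<Omega> then u y else \<psi> y) - u x\<bar> powr p) \<partial>m x) \<partial>\<nu>)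
           + (\<integral>\<^sup>+ y\<in>\<Gamma>. ennreal (\<bar>\<psi> y\<bar> powr p) \<partial>\<nu>)"
      unfolding lam_def
      by (rule final_ineq[OF finite_measure_axioms sb msets Om \<Gamma>b \<Gamma>\<Omega> \<Omega>'null \<Omega>'\<Omega> \<Omega>'b Lk0 LkS Lkb LkG k0
               Tsub Tb' th(1) \<beta> p low u \<psi>]) 
  qed
qed

theorem mainTheorem12:
  fixes m :: "'a::polish_space \<Rightarrow> 'a measure" and \<nu> :: "'a measure" and \<Omega> :: "'a set"
  assumes "metric_random_walk_space m"
    and "invariant_measure m \<nu>" and "reversible_measure m \<nu>"
    and "emeasure \<nu> UNIV < \<infinity>" and "ergodic m \<nu>"
    and "length_space TYPE('a)" and "doubling \<nu>"
    and "\<Omega> \<in> sets borel" and "bounded \<Omega>"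
    and "0 < emeasure \<nu> \<Omega>" and "emeasure \<nu> \<Omega> < emeasure \<nu> UNIV"
    and "\<exists>\<alpha>>0. \<exists>\<epsilon>>0.
          (\<forall>x. \<forall>A \<in> sets borel.
             ennreal \<alpha> * emeasure \<nu> (A \<inter> ball x \<epsilon>) / emeasure \<nu> (ball x \<epsilon>) \<le> emeasure (m x) A)
        \<or> (\<exists>\<delta>. 0 < \<delta> \<and> \<delta> < \<epsilon> \<and> (\<forall>x.
             0 < emeasure \<nu> (ball x \<epsilon> - cball x \<delta>) \<and>
             (\<forall>A \<in> sets borel.
               ennreal \<alpha> * emeasure \<nu> (A \<inter> (ball x \<epsilon> - cball x \<delta>)) / emeasure \<nu> (ball x \<epsilon> - cball x \<delta>)
                 \<le> emeasure (m x) A)))"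
  shows "\<forall>p::real. p \<ge> 1 \<longrightarrow> poincare_ineq m \<nu> \<Omega> p"
proof (intro allI impI)
  fix p :: real assume p: "p \<ge> 1"
  obtain \<alpha> \<epsilon> where \<alpha>: "\<alpha> > 0" and \<epsilon>: "\<epsilon> > 0" and H:
    "(\<forall>x. \<forall>A \<in> sets borel.
             ennreal \<alpha> * emeasure \<nu> (A \<inter> ball x \<epsilon>) / emeasure \<nu> (ball x \<epsilon>) \<le> emeasure (m x) A)
        \<or> (\<exists>\<delta>. 0 < \<delta> \<and> \<delta> < \<epsilon> \<and> (\<forall>x.
             0 < emeasure \<nu> (ball x \<epsilon> - cball x \<delta>) \<and>
             (\<forall>A \<in> sets borel.
               ennreal \<alpha> * emeasure \<nu> (A \<inter> (ball x \<epsilon> - cball x \<delta>)) / emeasure \<nu> (ball x \<epsilon> - cball x \<delta>)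
                 \<le> emeasure (m x) A)))"
    using assms(12) by blast
  have sb: "sets \<nu> = sets borel" using assms(2) unfolding invariant_measure_def by blast
  from H show "poincare_ineq m \<nu> \<Omega> p"
  proof
    assume H1: "\<forall>x. \<forall>A \<in> sets borel.
             ennreal \<alpha> * emeasure \<nu> (A \<inter> ball x \<epsilon>) / emeasure \<nu> (ball x \<epsilon>) \<le> emeasure (m x) A"
    have nn: "(-1::real) < dist x y" for x y :: 'a
    proof -
      have "0 \<le> dist x y" by simp
      then show ?thesis by linarith
    qed
    have eqb: "\<And>x::'a. {y. (-1) < dist x y \<and> dist x y < \<epsilon>} = ball x \<epsilon>"
      using nn by auto
    have Kne: "\<forall>x::'a. \<exists>w. (-1) < dist x w \<and> dist x w < \<epsilon>" 
    proof
      fix x :: 'a show "\<exists>w. (-1) < dist x w \<and> dist x w < \<epsilon>" using \<epsilon> by (intro exI[of _ x]) simp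
    qed
    have ml: "\<forall>x. \<forall>A\<in>sets borel. ennreal \<alpha> * emeasure \<nu> (A \<inter> {y. (-1) < dist x y \<and> dist x y < \<epsilon>})
                   / emeasure \<nu> {y. (-1) < dist x y \<and> dist x y < \<epsilon>} \<le> emeasure (m x) A"
      unfolding eqb using H1 .
    show ?thesis by (rule core[OF assms(1) sb assms(4) assms(6) assms(7) assms(8) assms(9) assms(10) assms(11) \<alpha> Kne ml p])
  next
    assume "\<exists>\<delta>. 0 < \<delta> \<and> \<delta> < \<epsilon> \<and> (\<forall>x.
             0 < emeasure \<nu> (ball x \<epsilon> - cball x \<delta>) \<and>
             (\<forall>A \<in> sets borel.
               ennreal \<alpha> * emeasure \<nu> (A \<inter> (ball x \<epsilon> - cball x \<delta>)) / emeasure \<nu> (ball x \<epsilon> - cball x \<delta>)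
                 \<le> emeasure (m x) A))"
    then obtain \<delta> where H2: "\<forall>x.
             0 < emeasure \<nu> (ball x \<epsilon> - cball x \<delta>) \<and>
             (\<forall>A \<in> sets borel.
               ennreal \<alpha> * emeasure \<nu> (A \<inter> (ball x \<epsilon> - cball x \<delta>)) / emeasure \<nu> (ball x \<epsilon> - cball x \<delta>)
                 \<le> emeasure (m x) A)" by blast
    have eqa: "\<And>x::'a. {y. \<delta> < dist x y \<and> dist x y < \<epsilon>} = ball x \<epsilon> - cball x \<delta>" by auto
    have Kne: "\<forall>x::'a. \<exists>w. \<delta> < dist x w \<and> dist x w < \<epsilon>"
    proof
      fix x :: 'a
      have "ball x \<epsilon> - cball x \<delta> \<noteq> {}" 
      proof
        assume e: "ball x \<epsilon> - cball x \<delta> = {}"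
        have "0 < emeasure \<nu> (ball x \<epsilon> - cball x \<delta>)" using H2 by blast
        then show False unfolding e by simp
      qed
      then show "\<exists>w. \<delta> < dist x w \<and> dist x w < \<epsilon>" unfolding eqa[symmetric] by blast
    qed
    have ml: "\<forall>x. \<forall>A\<in>sets borel. ennreal \<alpha> * emeasure \<nu> (A \<inter> {y. \<delta> < dist x y \<and> dist x y < \<epsilon>})
                   / emeasure \<nu> {y. \<delta> < dist x y \<and> dist x y < \<epsilon>} \<le> emeasure (m x) A"
      unfolding eqa using H2 by blast
    show ?thesis by (rule core[OF assms(1) sb assms(4) assms(6) assms(7) assms(8) assms(9) assms(10) assms(11) \<alpha> Kne ml p])
  qed
qed


end
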